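(* Let $n\ge 3$ be finite and let $\mathfrak D$ be a polyadic equality algebra of dimension $n$ that is generated by the set $\{x\in D:\Delta x\neq n\}$. If the diagonal free reduct $\mathfrak{Rd}_{df}\mathfrak D$ is completely representable, then $\mathfrak D$ is completely representable.
   Context: For an element $x$ of an algebra of dimension $n$, $\Delta x=\{i<n: \mathsf c_ix\neq x\}$ is its dimension set. $\mathfrak{Rd}_{df}\mathfrak D$ is the reduct of $\mathfrak D$ obtained by discarding diagonal elements and substitutions, a diagonal free cylindric algebra. An algebra is completely representable if there is an injective homomorphism into a product of set algebras of the appropriate type (for diagonal free algebras, with units of the form $\prod_{i<n}U_i$) preserving all existing suprema. *)

theory Defs
  imports "HOL-Library.FuncSet"
begin

text \<open>Dimension indices are the naturals below n; maps tau are
  the extensional functions in {0..<n} to {0..<n}.\<close>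

record 'a pea =
  pcar   :: "'a set"
  pjoin  :: "'a \<Rightarrow> 'a \<Rightarrow> 'a"
  pmeet  :: "'a \<Rightarrow> 'a \<Rightarrow> 'a"
  pcompl :: "'a \<Rightarrow> 'a"
  pzero  :: "'a"
  pone   :: "'a"
  pcyl   :: "nat set \<Rightarrow> 'a \<Rightarrow> 'a"
  pdiag  :: "nat \<Rightarrow> nat \<Rightarrow> 'a"
  psubst :: "(nat \<Rightarrow> nat) \<Rightarrow> 'a \<Rightarrow> 'a"

definition transf :: "nat \<Rightarrow> (nat \<Rightarrow> nat) set" where
  "transf n = ({0..<n} \<rightarrow>\<^sub>E {0..<n})"

definition boolean_algebra_on :: "'a pea \<Rightarrow> bool" where
  "boolean_algebra_on A \<longleftrightarrow>
    pzero A \<in> pcar A \<and> pone A \<in> pcar A \<and>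
    (\<forall>x\<in>pcar A. \<forall>y\<in>pcar A. pjoin A x y \<in> pcar A \<and> pmeet A x y \<in> pcar A) \<and>
    (\<forall>x\<in>pcar A. pcompl A x \<in> pcar A) \<and>
    (\<forall>x\<in>pcar A. \<forall>y\<in>pcar A.
        pjoin A x y = pjoin A y x \<and> pmeet A x y = pmeet A y x \<and>
        pjoin A x (pmeet A x y) = x \<and> pmeet A x (pjoin A x y) = x) \<and>
    (\<forall>x\<in>pcar A. \<forall>y\<in>pcar A. \<forall>z\<in>pcar A.
        pjoin A x (pjoin A y z) = pjoin A (pjoin A x y) z \<and>
        pmeet A x (pmeet A y z) = pmeet A (pmeet A x y) z \<and>
        pmeet A x (pjoin A y z) = pjoin A (pmeet A x y) (pmeet A x z)) \<and>
    (\<forall>x\<in>pcar A. pjoin A x (pzero A) = x \<and> pmeet A x (pone A) = x \<and>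
        pjoin A x (pcompl A x) = pone A \<and> pmeet A x (pcompl A x) = pzero A)"

definition ple :: "'a pea \<Rightarrow> 'a \<Rightarrow> 'a \<Rightarrow> bool" where
  "ple A x y \<longleftrightarrow> pmeet A x y = x"

definition PEA :: "nat \<Rightarrow> 'a pea \<Rightarrow> bool" where
  "PEA n A \<longleftrightarrow> boolean_algebra_on A \<and>
    (\<forall>\<Gamma>\<subseteq>{0..<n}. \<forall>x\<in>pcar A. pcyl A \<Gamma> x \<in> pcar A) \<and>
    (\<forall>i<n. \<forall>j<n. pdiag A i j \<in> pcar A) \<and>
    (\<forall>\<tau>\<in>transf n. \<forall>x\<in>pcar A. psubst A \<tau> x \<in> pcar A) \<and>
    (\<forall>\<Gamma>\<subseteq>{0..<n}. pcyl A \<Gamma> (pzero A) = pzero A) \<and>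
    (\<forall>\<Gamma>\<subseteq>{0..<n}. \<forall>x\<in>pcar A. pjoin A x (pcyl A \<Gamma> x) = pcyl A \<Gamma> x) \<and>
    (\<forall>\<Gamma>\<subseteq>{0..<n}. \<forall>x\<in>pcar A. \<forall>y\<in>pcar A.
        pcyl A \<Gamma> (pmeet A x (pcyl A \<Gamma> y)) = pmeet A (pcyl A \<Gamma> x) (pcyl A \<Gamma> y)) \<and>
    (\<forall>x\<in>pcar A. pcyl A {} x = x) \<and>
    (\<forall>\<Gamma>\<subseteq>{0..<n}. \<forall>\<Delta>\<subseteq>{0..<n}. \<forall>x\<in>pcar A.
        pcyl A (\<Gamma> \<union> \<Delta>) x = pcyl A \<Gamma> (pcyl A \<Delta> x)) \<and>
    (\<forall>\<tau>\<in>transf n. \<forall>x\<in>pcar A. \<forall>y\<in>pcar A.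
        psubst A \<tau> (pjoin A x y) = pjoin A (psubst A \<tau> x) (psubst A \<tau> y) \<and>
        psubst A \<tau> (pmeet A x y) = pmeet A (psubst A \<tau> x) (psubst A \<tau> y) \<and>
        psubst A \<tau> (pcompl A x) = pcompl A (psubst A \<tau> x) \<and>
        psubst A \<tau> (pzero A) = pzero A \<and> psubst A \<tau> (pone A) = pone A) \<and>
    (\<forall>x\<in>pcar A. psubst A (restrict id {0..<n}) x = x) \<and>
    (\<forall>\<sigma>\<in>transf n. \<forall>\<tau>\<in>transf n. \<forall>x\<in>pcar A.
        psubst A (restrict (\<sigma> \<circ> \<tau>) {0..<n}) x = psubst A \<sigma> (psubst A \<tau> x)) \<and>
    (\<forall>\<Gamma>\<subseteq>{0..<n}. \<forall>\<sigma>\<in>transf n. \<forall>\<tau>\<in>transf n. \<forall>x\<in>pcar A.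
        (\<forall>i\<in>{0..<n} - \<Gamma>. \<sigma> i = \<tau> i) \<longrightarrow>
        psubst A \<sigma> (pcyl A \<Gamma> x) = psubst A \<tau> (pcyl A \<Gamma> x)) \<and>
    (\<forall>\<Gamma>\<subseteq>{0..<n}. \<forall>\<tau>\<in>transf n. \<forall>x\<in>pcar A.
        inj_on \<tau> ({0..<n} \<inter> \<tau> -` \<Gamma>) \<longrightarrow>
        pcyl A \<Gamma> (psubst A \<tau> x) = psubst A \<tau> (pcyl A ({0..<n} \<inter> \<tau> -` \<Gamma>) x)) \<and>
    (\<forall>\<tau>\<in>transf n. \<forall>i<n. \<forall>j<n. psubst A \<tau> (pdiag A i j) = pdiag A (\<tau> i) (\<tau> j)) \<and>
    (\<forall>i<n. pdiag A i i = pone A) \<and>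
    (\<forall>i<n. \<forall>j<n. \<forall>x\<in>pcar A.
        ple A (pmeet A x (pdiag A i j)) (psubst A ((restrict id {0..<n})(j := i)) x))"

definition pc :: "'a pea \<Rightarrow> nat \<Rightarrow> 'a \<Rightarrow> 'a" where
  "pc A i x = pcyl A {i} x"

definition dimset :: "nat \<Rightarrow> 'a pea \<Rightarrow> 'a \<Rightarrow> nat set" where
  "dimset n A x = {i. i < n \<and> pc A i x \<noteq> x}"

definition pea_generated_by :: "nat \<Rightarrow> 'a pea \<Rightarrow> 'a set \<Rightarrow> bool" where
  "pea_generated_by n A G \<longleftrightarrow>
    (\<forall>S. G \<subseteq> S \<and> S \<subseteq> pcar A \<and>
         pzero A \<in> S \<and> pone A \<in> S \<and>
         (\<forall>x\<in>S. \<forall>y\<in>S. pjoin A x y \<in> S \<and> pmeet A x y \<in> S) \<and>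
         (\<forall>x\<in>S. pcompl A x \<in> S) \<and>
         (\<forall>\<Gamma>\<subseteq>{0..<n}. \<forall>x\<in>S. pcyl A \<Gamma> x \<in> S) \<and>
         (\<forall>i<n. \<forall>j<n. pdiag A i j \<in> S) \<and>
         (\<forall>\<tau>\<in>transf n. \<forall>x\<in>S. psubst A \<tau> x \<in> S)
       \<longrightarrow> pcar A \<subseteq> S)"

definition is_sup :: "'a pea \<Rightarrow> 'a set \<Rightarrow> 'a \<Rightarrow> bool" where
  "is_sup A X s \<longleftrightarrow> s \<in> pcar A \<and> (\<forall>x\<in>X. ple A x s) \<and>
     (\<forall>u\<in>pcar A. (\<forall>x\<in>X. ple A x u) \<longrightarrow> ple A s u)"

definition pea_set_hom :: "nat \<Rightarrow> 'a pea \<Rightarrow> 'b set \<Rightarrow> ('a \<Rightarrow> (nat \<Rightarrow> 'b) set) \<Rightarrow> bool" where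
  "pea_set_hom n A U h \<longleftrightarrow>
    (let V = ({0..<n} \<rightarrow>\<^sub>E U) in
    (\<forall>x\<in>pcar A. h x \<subseteq> V) \<and>
    h (pzero A) = {} \<and> h (pone A) = V \<and>
    (\<forall>x\<in>pcar A. \<forall>y\<in>pcar A. h (pjoin A x y) = h x \<union> h y \<and> h (pmeet A x y) = h x \<inter> h y) \<and>
    (\<forall>x\<in>pcar A. h (pcompl A x) = V - h x) \<and>
    (\<forall>\<Gamma>\<subseteq>{0..<n}. \<forall>x\<in>pcar A.
        h (pcyl A \<Gamma> x) = {s\<in>V. \<exists>t\<in>h x. \<forall>i\<in>{0..<n} - \<Gamma>. s i = t i}) \<and>
    (\<forall>i<n. \<forall>j<n. h (pdiag A i j) = {s\<in>V. s i = s j}) \<and>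
    (\<forall>\<tau>\<in>transf n. \<forall>x\<in>pcar A.
        h (psubst A \<tau> x) = {s\<in>V. (\<lambda>i\<in>{0..<n}. s (\<tau> i)) \<in> h x}))"

text \<open>Full diagonal-free set algebra with unit prod_{i<n} U_i: h is a homomorphism from
  the diagonal free reduct Rd_df A (Boolean operations and c_i, i<n) into it.\<close>
definition df_set_hom :: "nat \<Rightarrow> 'a pea \<Rightarrow> (nat \<Rightarrow> 'b set) \<Rightarrow> ('a \<Rightarrow> (nat \<Rightarrow> 'b) set) \<Rightarrow> bool" where
  "df_set_hom n A U h \<longleftrightarrow>
    (let V = Pi\<^sub>E {0..<n} U in
    (\<forall>x\<in>pcar A. h x \<subseteq> V) \<and>
    h (pzero A) = {} \<and> h (pone A) = V \<and>
    (\<forall>x\<in>pcar A. \<forall>y\<in>pcar A. h (pjoin A x y) = h x \<union> h y \<and> h (pmeet A x y) = h x \<inter> h y) \<and>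
    (\<forall>x\<in>pcar A. h (pcompl A x) = V - h x) \<and>
    (\<forall>i<n. \<forall>x\<in>pcar A.
        h (pc A i x) = {s\<in>V. \<exists>t\<in>h x. \<forall>j\<in>{0..<n}. j \<noteq> i \<longrightarrow> s j = t j}))"

text \<open>Complete representation: an injective homomorphism into a product (indexed by K)
  of set algebras, preserving all existing suprema (suprema in the product are
  componentwise unions).\<close>
definition complete_rep_family :: "'a pea \<Rightarrow> 'k set \<Rightarrow> ('k \<Rightarrow> 'a \<Rightarrow> (nat \<Rightarrow> 'b) set) \<Rightarrow> bool" where
  "complete_rep_family A K h \<longleftrightarrow>
    (\<forall>x\<in>pcar A. \<forall>y\<in>pcar A. (\<forall>k\<in>K. h k x = h k y) \<longrightarrow> x = y) \<and>
    (\<forall>X s. X \<subseteq> pcar A \<longrightarrow> is_sup A X s \<longrightarrow> (\<forall>k\<in>K. h k s = (\<Union>x\<in>X. h k x)))"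

definition pea_completely_representable ::
    "nat \<Rightarrow> 'a pea \<Rightarrow> 'k itself \<Rightarrow> 'b itself \<Rightarrow> bool" where
  "pea_completely_representable n A _ _ \<longleftrightarrow>
    (\<exists>(K::'k set) (U::'k \<Rightarrow> 'b set) h.
        (\<forall>k\<in>K. pea_set_hom n A (U k) (h k)) \<and> complete_rep_family A K h)"

definition df_completely_representable ::
    "nat \<Rightarrow> 'a pea \<Rightarrow> 'k itself \<Rightarrow> 'b itself \<Rightarrow> bool" where
  "df_completely_representable n A _ _ \<longleftrightarrow>
    (\<exists>(K::'k set) (U::'k \<Rightarrow> nat \<Rightarrow> 'b set) h.
        (\<forall>k\<in>K. df_set_hom n A (U k) (h k)) \<and> complete_rep_family A K h)"

end

theory Submission
  imports Defs
begin


locale peactx =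
  fixes n :: nat and D :: "'a pea"
  assumes PEA: "PEA n D" and n3: "n \<ge> 3"
begin

abbreviation "car \<equiv> pcar D"
abbreviation "jn \<equiv> pjoin D"
abbreviation "mt \<equiv> pmeet D"
abbreviation "cm \<equiv> pcompl D"
abbreviation "cy \<equiv> pcyl D"
abbreviation "dg \<equiv> pdiag D"
abbreviation "sb \<equiv> psubst D"

lemma axs: "boolean_algebra_on D \<and>
    (\<forall>\<Gamma>\<subseteq>{0..<n}. \<forall>x\<in>pcar D. pcyl D \<Gamma> x \<in> pcar D) \<and>
    (\<forall>i<n. \<forall>j<n. pdiag D i j \<in> pcar D) \<and>
    (\<forall>\<tau>\<in>transf n. \<forall>x\<in>pcar D. psubst D \<tau> x \<in> pcar D) \<and>
    (\<forall>\<Gamma>\<subseteq>{0..<n}. pcyl D \<Gamma> (pzero D) = pzero D) \<and>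
    (\<forall>\<Gamma>\<subseteq>{0..<n}. \<forall>x\<in>pcar D. pjoin D x (pcyl D \<Gamma> x) = pcyl D \<Gamma> x) \<and>
    (\<forall>\<Gamma>\<subseteq>{0..<n}. \<forall>x\<in>pcar D. \<forall>y\<in>pcar D.
        pcyl D \<Gamma> (pmeet D x (pcyl D \<Gamma> y)) = pmeet D (pcyl D \<Gamma> x) (pcyl D \<Gamma> y)) \<and>
    (\<forall>x\<in>pcar D. pcyl D {} x = x) \<and>
    (\<forall>\<Gamma>\<subseteq>{0..<n}. \<forall>\<Delta>\<subseteq>{0..<n}. \<forall>x\<in>pcar D.
        pcyl D (\<Gamma> \<union> \<Delta>) x = pcyl D \<Gamma> (pcyl D \<Delta> x)) \<and>
    (\<forall>\<tau>\<in>transf n. \<forall>x\<in>pcar D. \<forall>y\<in>pcar D.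
        psubst D \<tau> (pjoin D x y) = pjoin D (psubst D \<tau> x) (psubst D \<tau> y) \<and>
        psubst D \<tau> (pmeet D x y) = pmeet D (psubst D \<tau> x) (psubst D \<tau> y) \<and>
        psubst D \<tau> (pcompl D x) = pcompl D (psubst D \<tau> x) \<and>
        psubst D \<tau> (pzero D) = pzero D \<and> psubst D \<tau> (pone D) = pone D) \<and>
    (\<forall>x\<in>pcar D. psubst D (restrict id {0..<n}) x = x) \<and>
    (\<forall>\<sigma>\<in>transf n. \<forall>\<tau>\<in>transf n. \<forall>x\<in>pcar D.
        psubst D (restrict (\<sigma> \<circ> \<tau>) {0..<n}) x = psubst D \<sigma> (psubst D \<tau> x)) \<and>
    (\<forall>\<Gamma>\<subseteq>{0..<n}. \<forall>\<sigma>\<in>transf n. \<forall>\<tau>\<in>transf n. \<forall>x\<in>pcar D.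
        (\<forall>i\<in>{0..<n} - \<Gamma>. \<sigma> i = \<tau> i) \<longrightarrow>
        psubst D \<sigma> (pcyl D \<Gamma> x) = psubst D \<tau> (pcyl D \<Gamma> x)) \<and>
    (\<forall>\<Gamma>\<subseteq>{0..<n}. \<forall>\<tau>\<in>transf n. \<forall>x\<in>pcar D.
        inj_on \<tau> ({0..<n} \<inter> \<tau> -` \<Gamma>) \<longrightarrow>
        pcyl D \<Gamma> (psubst D \<tau> x) = psubst D \<tau> (pcyl D ({0..<n} \<inter> \<tau> -` \<Gamma>) x)) \<and>
    (\<forall>\<tau>\<in>transf n. \<forall>i<n. \<forall>j<n. psubst D \<tau> (pdiag D i j) = pdiag D (\<tau> i) (\<tau> j)) \<and>
    (\<forall>i<n. pdiag D i i = pone D) \<and>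
    (\<forall>i<n. \<forall>j<n. \<forall>x\<in>pcar D.
        ple D (pmeet D x (pdiag D i j)) (psubst D ((restrict id {0..<n})(j := i)) x))"
  by (rule PEA[unfolded PEA_def])

lemmas ax_ba = axs[THEN conjunct1]
lemmas ax2 = axs[THEN conjunct2]
lemmas ax_cycar = ax2[THEN conjunct1]
lemmas ax3 = ax2[THEN conjunct2]
lemmas ax_dgcar = ax3[THEN conjunct1]
lemmas ax4 = ax3[THEN conjunct2]
lemmas ax_sbcar = ax4[THEN conjunct1]
lemmas ax5 = ax4[THEN conjunct2]
lemmas ax_cyzero = ax5[THEN conjunct1]
lemmas ax6 = ax5[THEN conjunct2]
lemmas ax_cyext = ax6[THEN conjunct1]
lemmas ax7 = ax6[THEN conjunct2]
lemmas ax_cymeet = ax7[THEN conjunct1]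
lemmas ax8 = ax7[THEN conjunct2]
lemmas ax_cyempty = ax8[THEN conjunct1]
lemmas ax9 = ax8[THEN conjunct2]
lemmas ax_cyunion = ax9[THEN conjunct1]
lemmas ax10 = ax9[THEN conjunct2]
lemmas ax_sbhom = ax10[THEN conjunct1]
lemmas ax11 = ax10[THEN conjunct2]
lemmas ax_sbid = ax11[THEN conjunct1]
lemmas ax12 = ax11[THEN conjunct2]
lemmas ax_sbcomp = ax12[THEN conjunct1]
lemmas ax13 = ax12[THEN conjunct2]
lemmas ax_sbagree = ax13[THEN conjunct1]
lemmas ax14 = ax13[THEN conjunct2]
lemmas ax_cysb = ax14[THEN conjunct1]
lemmas ax15 = ax14[THEN conjunct2]
lemmas ax_sbdg = ax15[THEN conjunct1]
lemmas ax16 = ax15[THEN conjunct2]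
lemmas ax_dgii = ax16[THEN conjunct1]
lemmas ax_E3 = ax16[THEN conjunct2]

lemma ba: "boolean_algebra_on D" by (rule ax_ba)
lemma baxs: "pzero D \<in> pcar D \<and> pone D \<in> pcar D \<and>
    (\<forall>x\<in>pcar D. \<forall>y\<in>pcar D. pjoin D x y \<in> pcar D \<and> pmeet D x y \<in> pcar D) \<and>
    (\<forall>x\<in>pcar D. pcompl D x \<in> pcar D)" using ba unfolding boolean_algebra_on_def by (elim conjE) (intro conjI)
lemma zero_car: "pzero D \<in> car" using baxs by blast
lemma one_car: "pone D \<in> car" using baxs by blast
lemma jn_car: "x \<in> car \<Longrightarrow> y \<in> car \<Longrightarrow> jn x y \<in> car" using baxs by blast
lemma mt_car: "x \<in> car \<Longrightarrow> y \<in> car \<Longrightarrow> mt x y \<in> car" using baxs by blast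
lemma cm_car: "x \<in> car \<Longrightarrow> cm x \<in> car" using baxs by blast
lemma cy_car: "\<Gamma> \<subseteq> {0..<n} \<Longrightarrow> x \<in> car \<Longrightarrow> cy \<Gamma> x \<in> car" using ax_cycar by blast
lemma dg_car: "i < n \<Longrightarrow> j < n \<Longrightarrow> dg i j \<in> car" using ax_dgcar by blast
lemma sb_car: "\<tau> \<in> transf n \<Longrightarrow> x \<in> car \<Longrightarrow> sb \<tau> x \<in> car" using ax_sbcar by blast
lemma cy_zero: "\<Gamma> \<subseteq> {0..<n} \<Longrightarrow> cy \<Gamma> (pzero D) = pzero D" using ax_cyzero by blast
lemma cy_ext: "\<Gamma> \<subseteq> {0..<n} \<Longrightarrow> x \<in> car \<Longrightarrow> jn x (cy \<Gamma> x) = cy \<Gamma> x" using ax_cyext by blast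
lemma cy_empty: "x \<in> car \<Longrightarrow> cy {} x = x" using ax_cyempty by blast
lemma cy_union: "\<Gamma> \<subseteq> {0..<n} \<Longrightarrow> \<Delta> \<subseteq> {0..<n} \<Longrightarrow> x \<in> car \<Longrightarrow> cy (\<Gamma> \<union> \<Delta>) x = cy \<Gamma> (cy \<Delta> x)"
  using ax_cyunion by blast
lemma sb_jn: "\<tau> \<in> transf n \<Longrightarrow> x \<in> car \<Longrightarrow> y \<in> car \<Longrightarrow> sb \<tau> (jn x y) = jn (sb \<tau> x) (sb \<tau> y)"
  using ax_sbhom by blast
lemma sb_mt: "\<tau> \<in> transf n \<Longrightarrow> x \<in> car \<Longrightarrow> y \<in> car \<Longrightarrow> sb \<tau> (mt x y) = mt (sb \<tau> x) (sb \<tau> y)"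
  using ax_sbhom by blast
lemma sb_cm: "\<tau> \<in> transf n \<Longrightarrow> x \<in> car \<Longrightarrow> sb \<tau> (cm x) = cm (sb \<tau> x)"
  using ax_sbhom by blast
lemma sb_zero: "\<tau> \<in> transf n \<Longrightarrow> sb \<tau> (pzero D) = pzero D"
  using ax_sbhom zero_car by blast
lemma sb_id: "x \<in> car \<Longrightarrow> sb (restrict id {0..<n}) x = x"
  using ax_sbid by blast
lemma sb_comp: "\<sigma> \<in> transf n \<Longrightarrow> \<tau> \<in> transf n \<Longrightarrow> x \<in> car \<Longrightarrow>
   sb (restrict (\<sigma> \<circ> \<tau>) {0..<n}) x = sb \<sigma> (sb \<tau> x)"
  using ax_sbcomp by blast
lemma sb_cy_agree: "\<Gamma> \<subseteq> {0..<n} \<Longrightarrow> \<sigma> \<in> transf n \<Longrightarrow> \<tau> \<in> transf n \<Longrightarrow> x \<in> car \<Longrightarrow>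
   (\<forall>i\<in>{0..<n} - \<Gamma>. \<sigma> i = \<tau> i) \<Longrightarrow> sb \<sigma> (cy \<Gamma> x) = sb \<tau> (cy \<Gamma> x)"
  using ax_sbagree by blast
lemma cy_sb: "\<Gamma> \<subseteq> {0..<n} \<Longrightarrow> \<tau> \<in> transf n \<Longrightarrow> x \<in> car \<Longrightarrow>
   inj_on \<tau> ({0..<n} \<inter> \<tau> -` \<Gamma>) \<Longrightarrow>
   cy \<Gamma> (sb \<tau> x) = sb \<tau> (cy ({0..<n} \<inter> \<tau> -` \<Gamma>) x)"
  using ax_cysb by blast
lemma sb_dg: "\<tau> \<in> transf n \<Longrightarrow> i < n \<Longrightarrow> j < n \<Longrightarrow> sb \<tau> (dg i j) = dg (\<tau> i) (\<tau> j)"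
  using ax_sbdg by blast
lemma dg_ii: "i < n \<Longrightarrow> dg i i = pone D"
  using ax_dgii by blast
lemma E3: "i < n \<Longrightarrow> j < n \<Longrightarrow> x \<in> car \<Longrightarrow>
   ple D (mt x (dg i j)) (sb ((restrict id {0..<n})(j := i)) x)"
  using ax_E3 by blast

lemma transf_restrict: "(\<And>i. i < n \<Longrightarrow> f i < n) \<Longrightarrow> restrict f {0..<n} \<in> transf n"
  unfolding transf_def by auto

lemma transf_upd: "\<tau> \<in> transf n \<Longrightarrow> j < n \<Longrightarrow> i < n \<Longrightarrow> \<tau>(j := i) \<in> transf n"
  unfolding transf_def by (auto simp: PiE_def Pi_def extensional_def)

lemma transf_ran: "\<tau> \<in> transf n \<Longrightarrow> i < n \<Longrightarrow> \<tau> i < n"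
  unfolding transf_def by auto

lemma id_transf: "restrict id {0..<n} \<in> transf n"
  by (rule transf_restrict) auto

lemma cy_sb_notin: assumes "\<tau> \<in> transf n" "x \<in> car" "k < n" "k \<notin> \<tau> ` {0..<n}"
  shows "cy {k} (sb \<tau> x) = sb \<tau> x"
proof -
  have e: "{0..<n} \<inter> \<tau> -` {k} = {}" using assms(4) by auto
  show ?thesis using cy_sb[of "{k}" \<tau> x] assms e cy_empty by auto
qed

lemma cy_car1: "k < n \<Longrightarrow> x \<in> car \<Longrightarrow> cy {k} x \<in> car" by (rule cy_car) auto

end


context peactx begin

definition "GG = {x \<in> car. dimset n D x \<noteq> {0..<n}}"

lemma GG_iff: "x \<in> GG \<longleftrightarrow> x \<in> car \<and> (\<exists>k<n. cy {k} x = x)"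
proof -
  have "dimset n D x \<subseteq> {0..<n}" unfolding dimset_def by auto
  then have "dimset n D x \<noteq> {0..<n} \<longleftrightarrow> (\<exists>k<n. k \<notin> dimset n D x)" by auto
  also have "\<dots> \<longleftrightarrow> (\<exists>k<n. cy {k} x = x)" unfolding dimset_def pc_def by (simp, blast)
  finally show ?thesis unfolding GG_def by blast
qed

lemma cyG: assumes "\<Gamma> \<subseteq> {0..<n}" "\<Gamma> \<noteq> {}" "x \<in> car" shows "cy \<Gamma> x \<in> GG"
proof -
  obtain k where k: "k \<in> \<Gamma>" using assms(2) by auto
  have "cy {k} (cy \<Gamma> x) = cy ({k} \<union> \<Gamma>) x" using cy_union[of "{k}" \<Gamma> x] assms k by auto
  also have "{k} \<union> \<Gamma> = \<Gamma>" using k by auto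
  finally show ?thesis unfolding GG_iff using k assms cy_car by auto
qed

lemma exists_other: assumes "i < n" "j < n" shows "\<exists>k<n. k \<noteq> i \<and> k \<noteq> j"
proof -
  have "card ({0..<n} - {i,j}) \<ge> 1"
  proof -
    have "card ({0..<n} - {i,j}) \<ge> card {0..<n} - card {i,j}" by (rule diff_card_le_card_Diff) auto
    moreover have "card {i,j} \<le> 2" by (simp add: card_insert_le_m1)
    ultimately show ?thesis using n3 by auto
  qed
  then obtain k where "k \<in> {0..<n} - {i,j}"
    by (metis all_not_in_conv card.empty not_one_le_zero)
  then show ?thesis by auto
qed

lemma dg_cy_other: assumes "i < n" "j < n" "k < n" "k \<noteq> i" "k \<noteq> j"
  shows "cy {k} (dg i j) = dg i j"
proof -
  let ?t = "(restrict id {0..<n})(k := i)"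
  have t: "?t \<in> transf n" using transf_upd[OF id_transf] assms by auto
  have e: "sb ?t (dg i j) = dg i j" using sb_dg[OF t assms(1,2)] assms by auto
  have "k \<notin> ?t ` {0..<n}" using assms by auto
  then have "cy {k} (sb ?t (dg i j)) = sb ?t (dg i j)" using cy_sb_notin[OF t dg_car[OF assms(1,2)] assms(3)] by auto
  then show ?thesis using e by simp
qed

lemma dgG: assumes "i < n" "j < n" shows "dg i j \<in> GG"
proof -
  obtain k where "k < n" "k \<noteq> i" "k \<noteq> j" using exists_other assms by blast
  then show ?thesis unfolding GG_iff using dg_cy_other assms dg_car by blast
qed

lemma zeroG: "pzero D \<in> GG"
  unfolding GG_iff using zero_car cy_zero[of "{0}"] n3 by (intro conjI exI[of _ 0]) auto

lemma oneG: "pone D \<in> GG"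
  using dgG[of 0 0] dg_ii[of 0] n3 by auto

lemma sbG: assumes t: "\<tau> \<in> transf n" and x: "x \<in> GG" shows "sb \<tau> x \<in> GG"
proof (cases "\<exists>m<n. m \<notin> \<tau> ` {0..<n}")
  case True
  then obtain m where "m < n" "m \<notin> \<tau> ` {0..<n}" by auto
  then show ?thesis unfolding GG_iff using cy_sb_notin[OF t _ \<open>m<n\<close>] x sb_car[OF t] unfolding GG_iff by auto
next
  case False
  then have sur: "\<tau> ` {0..<n} = {0..<n}" using transf_ran[OF t] by auto
  have inj: "inj_on \<tau> {0..<n}" using sur by (intro eq_card_imp_inj_on) auto
  obtain k where k: "k < n" "cy {k} x = x" and xc: "x \<in> car" using x unfolding GG_iff by auto
  have pre: "{0..<n} \<inter> \<tau> -` {\<tau> k} = {k}" using inj k(1) by (auto simp: inj_on_def)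
  have tk: "\<tau> k < n" using transf_ran[OF t k(1)] .
  have "cy {\<tau> k} (sb \<tau> x) = sb \<tau> (cy {k} x)"
    using cy_sb[of "{\<tau> k}" \<tau> x] tk t xc pre by auto
  then show ?thesis unfolding GG_iff using k tk sb_car[OF t xc] by auto
qed

end

locale peagen = peactx +
  assumes gen: "pea_generated_by n D {x \<in> pcar D. dimset n D x \<noteq> {0..<n}}"
begin

lemma gen_lemma:
  assumes GP: "GG \<subseteq> P"
    and jP: "\<And>x y. x \<in> P \<Longrightarrow> y \<in> P \<Longrightarrow> x \<in> car \<Longrightarrow> y \<in> car \<Longrightarrow> jn x y \<in> P"
    and mP: "\<And>x y. x \<in> P \<Longrightarrow> y \<in> P \<Longrightarrow> x \<in> car \<Longrightarrow> y \<in> car \<Longrightarrow> mt x y \<in> P"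
    and cP: "\<And>x. x \<in> P \<Longrightarrow> x \<in> car \<Longrightarrow> cm x \<in> P"
    and xc: "x \<in> car"
  shows "x \<in> P"
proof -
  define Q where "Q = {x \<in> car. \<forall>\<tau>\<in>transf n. sb \<tau> x \<in> P}"
  have GQ: "GG \<subseteq> Q" unfolding Q_def using sbG GP GG_iff by blast
  have "car \<subseteq> Q"
  proof (rule gen[unfolded pea_generated_by_def, rule_format, of Q], intro conjI)
    show "{x \<in> car. dimset n D x \<noteq> {0..<n}} \<subseteq> Q" using GQ unfolding GG_def .
    show "Q \<subseteq> car" unfolding Q_def by auto
    show "pzero D \<in> Q" using GQ zeroG by auto
    show "pone D \<in> Q" using GQ oneG by auto
    show "\<forall>x\<in>Q. \<forall>y\<in>Q. jn x y \<in> Q \<and> mt x y \<in> Q"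
      unfolding Q_def using jP mP sb_jn sb_mt jn_car mt_car sb_car by auto
    show "\<forall>x\<in>Q. cm x \<in> Q"
      unfolding Q_def using cP sb_cm cm_car sb_car by auto
    show "\<forall>\<Gamma>\<subseteq>{0..<n}. \<forall>x\<in>Q. cy \<Gamma> x \<in> Q"
    proof (intro allI impI ballI)
      fix \<Gamma> x assume "\<Gamma> \<subseteq> {0..<n}" "x \<in> Q"
      then show "cy \<Gamma> x \<in> Q"
        using cyG[of \<Gamma> x] GQ cy_empty[of x] unfolding Q_def by (cases "\<Gamma> = {}") auto
    qed
    show "\<forall>i<n. \<forall>j<n. dg i j \<in> Q" using dgG GQ by auto
    show "\<forall>\<tau>\<in>transf n. \<forall>x\<in>Q. sb \<tau> x \<in> Q"
    proof (intro ballI)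
      fix \<sigma> x assume s: "\<sigma> \<in> transf n" and x: "x \<in> Q"
      have "sb \<tau> (sb \<sigma> x) \<in> P" if t: "\<tau> \<in> transf n" for \<tau>
      proof -
        have r: "restrict (\<tau> \<circ> \<sigma>) {0..<n} \<in> transf n"
          by (rule transf_restrict) (use transf_ran[OF t] transf_ran[OF s] in auto)
        have "sb \<tau> (sb \<sigma> x) = sb (restrict (\<tau> \<circ> \<sigma>) {0..<n}) x"
          using sb_comp[OF t s] x unfolding Q_def by auto
        then show ?thesis using x r unfolding Q_def by auto
      qed
      then show "sb \<sigma> x \<in> Q" using sb_car[OF s] x unfolding Q_def by auto
    qed
  qed
  then have "sb (restrict id {0..<n}) x \<in> P" using xc id_transf unfolding Q_def by auto
  then show ?thesis using sb_id[OF xc] by simp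
qed

end


definition "rpl n j i = (restrict id {0..<n})(j := (i::nat))"
definition "mv n (\<rho>::nat\<Rightarrow>nat) = {i \<in> {0..<n}. \<rho> i \<noteq> i}"

lemma rpl_transf: "j < n \<Longrightarrow> i < n \<Longrightarrow> rpl n j i \<in> transf n"
  unfolding rpl_def transf_def by (auto simp: PiE_def extensional_def)

lemma rpl_apply: "l < n \<Longrightarrow> rpl n j i l = (if l = j then i else l)"
  unfolding rpl_def by auto

lemma transf_ext: "\<sigma> \<in> transf n \<Longrightarrow> \<tau> \<in> transf n \<Longrightarrow> (\<And>l. l < n \<Longrightarrow> \<sigma> l = \<tau> l) \<Longrightarrow> \<sigma> = \<tau>"
  unfolding transf_def by (rule extensionalityI[of _ "{0..<n}"]) (auto simp: PiE_def)

lemma transf_upd2: "\<tau> \<in> transf n \<Longrightarrow> j < n \<Longrightarrow> i < n \<Longrightarrow> \<tau>(j := i) \<in> transf n"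
  unfolding transf_def by (auto simp: PiE_def Pi_def extensional_def)

lemma transf_comp: "\<sigma> \<in> transf n \<Longrightarrow> \<tau> \<in> transf n \<Longrightarrow> restrict (\<sigma> \<circ> \<tau>) {0..<n} \<in> transf n"
  unfolding transf_def by (auto simp: PiE_def Pi_def extensional_def)

lemma transf_less: "\<tau> \<in> transf n \<Longrightarrow> i < n \<Longrightarrow> \<tau> i < n"
  unfolding transf_def by auto

lemma comp_eqI: "\<sigma> \<in> transf n \<Longrightarrow> \<tau> \<in> transf n \<Longrightarrow> \<rho> \<in> transf n \<Longrightarrow>
  (\<And>l. l < n \<Longrightarrow> \<rho> l = \<sigma> (\<tau> l)) \<Longrightarrow> \<rho> = restrict (\<sigma> \<circ> \<tau>) {0..<n}"
  by (rule transf_ext) (auto intro: transf_comp)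

lemma noninj_notsurj: assumes "\<rho> \<in> transf n" "\<not> inj_on \<rho> {0..<n}"
  shows "\<exists>m<n. m \<notin> \<rho> ` {0..<n}"
proof (rule ccontr)
  assume "\<not> ?thesis"
  then have "\<rho> ` {0..<n} = {0..<n}" using transf_less[OF assms(1)] by auto
  then have "inj_on \<rho> {0..<n}" by (intro eq_card_imp_inj_on) auto
  then show False using assms(2) by simp
qed

lemma inj_surj: assumes "\<rho> \<in> transf n" "inj_on \<rho> {0..<n}" "l < n" shows "\<exists>a<n. \<rho> a = l"
proof -
  have "\<rho> ` {0..<n} \<subseteq> {0..<n}" using transf_less[OF assms(1)] by auto
  moreover have "card (\<rho> ` {0..<n}) = card {0..<n}" using assms(2) by (simp add: card_image)
  ultimately have "\<rho> ` {0..<n} = {0..<n}" by (intro card_subset_eq) auto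
  then show ?thesis using assms(3) by (metis atLeastLessThan_iff imageE zero_le)
qed

lemma mv_less: assumes "a < n" "\<rho> a \<noteq> a" "\<rho>' a = a" "\<And>l. l < n \<Longrightarrow> l \<noteq> a \<Longrightarrow> (\<rho>' l = l) = (\<rho> l = l)"
  shows "card (mv n \<rho>') < card (mv n \<rho>)"
proof -
  have "mv n \<rho>' = mv n \<rho> - {a}" unfolding mv_def using assms by (auto; metis)
  moreover have "a \<in> mv n \<rho>" unfolding mv_def using assms by auto
  moreover have "finite (mv n \<rho>)" unfolding mv_def by auto
  ultimately show ?thesis by (metis card_Diff1_less)
qed

lemma comb_aux:
  fixes M :: "(nat \<Rightarrow> nat) set"
  assumes comp: "\<And>\<sigma> \<tau>. \<sigma> \<in> M \<Longrightarrow> \<tau> \<in> M \<Longrightarrow> restrict (\<sigma> \<circ> \<tau>) {0..<n} \<in> M"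
    and rep: "\<And>i j. i < n \<Longrightarrow> j < n \<Longrightarrow> i \<noteq> j \<Longrightarrow> rpl n j i \<in> M"
    and sub: "M \<subseteq> transf n"
  shows "\<forall>\<rho>. \<rho> \<in> transf n \<longrightarrow> \<not> inj_on \<rho> {0..<n} \<longrightarrow> card (mv n \<rho>) = N \<longrightarrow> \<rho> \<in> M"
proof (induction N rule: less_induct)
  case (less N)
  show ?case
  proof (intro allI impI)
    fix \<rho> assume t: "\<rho> \<in> transf n" and ni: "\<not> inj_on \<rho> {0..<n}" and cN: "card (mv n \<rho>) = N"
    have IH: "\<And>\<rho>'. \<rho>' \<in> transf n \<Longrightarrow> \<not> inj_on \<rho>' {0..<n} \<Longrightarrow> card (mv n \<rho>') < card (mv n \<rho>) \<Longrightarrow> \<rho>' \<in> M"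
      using less.IH cN by blast
    obtain m where m: "m < n" "m \<notin> \<rho> ` {0..<n}" using noninj_notsurj[OF t ni] by auto
    define c where "c = \<rho> m"
    have cn: "c < n" using transf_less[OF t m(1)] c_def by simp
    have cm: "c \<noteq> m" using m c_def by (metis atLeastLessThan_iff image_eqI zero_le)
    have nm: "\<And>l. l < n \<Longrightarrow> \<rho> l \<noteq> m" using m by auto
    define \<rho>1 where "\<rho>1 = \<rho>(m := m)"
    have t1: "\<rho>1 \<in> transf n" unfolding \<rho>1_def using transf_upd2[OF t m(1) m(1)] .
    show "\<rho> \<in> M"
    proof (cases "inj_on \<rho>1 {0..<n}")
      case False
      have "\<rho>1 \<in> M"
        using IH[OF t1 False] mv_less[of m n \<rho> \<rho>1] m cm c_def unfolding \<rho>1_def by auto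
      moreover have "rpl n m c \<in> M" using rep cn m cm by auto
      moreover have "\<rho> = restrict (rpl n m c \<circ> \<rho>1) {0..<n}"
        by (rule comp_eqI[OF rpl_transf[OF m(1) cn] t1 t])
           (auto simp: rpl_apply \<rho>1_def c_def nm transf_less[OF t] m(1))
      ultimately show ?thesis using comp by simp
    next
      case True
      obtain a where a: "a < n" "\<rho>1 a = c" using inj_surj[OF t1 True cn] by auto
      have am: "a \<noteq> m" using a cm unfolding \<rho>1_def by auto
      have ra: "\<rho> a = c" using a am unfolding \<rho>1_def by auto
      have inj1: "\<And>x y. x < n \<Longrightarrow> y < n \<Longrightarrow> x \<noteq> m \<Longrightarrow> y \<noteq> m \<Longrightarrow> \<rho> x = \<rho> y \<Longrightarrow> x = y"
        using True unfolding \<rho>1_def inj_on_def by (metis atLeastLessThan_iff fun_upd_other zero_le)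
      show ?thesis
      proof (cases "a = c")
        case False
        define \<rho>2 where "\<rho>2 = \<rho>(a := a)"
        have t2: "\<rho>2 \<in> transf n" unfolding \<rho>2_def using transf_upd2[OF t a(1) a(1)] .
        obtain j where j: "j < n" "\<rho>1 j = a" using inj_surj[OF t1 True a(1)] by auto
        have ja: "j \<noteq> a" using j a False by auto
        have jm: "j \<noteq> m" using j am unfolding \<rho>1_def by auto
        have "\<rho>2 j = \<rho>2 a" using j ja jm unfolding \<rho>2_def \<rho>1_def by auto
        then have ni2: "\<not> inj_on \<rho>2 {0..<n}" using ja j(1) a(1) unfolding inj_on_def by (metis atLeastLessThan_iff zero_le)
        have "\<rho>2 \<in> M"
          using IH[OF t2 ni2] mv_less[of a n \<rho> \<rho>2] a(1) ra False unfolding \<rho>2_def by auto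
        moreover have "rpl n a m \<in> M" using rep a(1) m(1) am by auto
        moreover have "\<rho> = restrict (\<rho>2 \<circ> rpl n a m) {0..<n}"
          by (rule comp_eqI[OF t2 rpl_transf[OF a(1) m(1)] t])
             (auto simp: rpl_apply \<rho>2_def ra c_def am[symmetric])
        ultimately show ?thesis using comp by simp
      next
        case True
        then have rc: "\<rho> c = c" and rmc: "\<rho> m = c" using ra c_def by auto
        show ?thesis
        proof (cases "\<forall>l<n. \<rho>1 l = l")
          case True
          have "\<rho> = rpl n m c"
            by (rule transf_ext[OF t rpl_transf[OF m(1) cn]])
               (use True in \<open>auto simp: rpl_apply \<rho>1_def c_def\<close>)
          then show ?thesis using rep m cn cm by auto
        next
          case False
          then obtain b where b: "b < n" "\<rho>1 b \<noteq> b" by auto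
          have bm: "b \<noteq> m" using b unfolding \<rho>1_def by auto
          define d where "d = \<rho> b"
          have dn: "d < n" using transf_less[OF t b(1)] d_def by simp
          have db: "d \<noteq> b" using b bm unfolding d_def \<rho>1_def by auto
          have dm: "d \<noteq> m" using nm b(1) d_def by auto
          have bc: "b \<noteq> c" using rc b bm unfolding \<rho>1_def by auto
          have dc: "d \<noteq> c" using inj1[of b c] b(1) cn bm cm bc rc d_def by auto
          have rd: "\<rho> d \<noteq> d" using inj1[of d b] dn b(1) dm bm db d_def by auto
          have rdn: "\<rho> d < n" using transf_less[OF t dn] .
          have onlyb: "\<And>l. l < n \<Longrightarrow> \<rho> l = d \<Longrightarrow> l = b"
          proof -
            fix l assume l: "l < n" "\<rho> l = d"
            have "l \<noteq> m" using l rmc dc by auto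
            then show "l = b" using inj1[of l b] l b(1) bm d_def by auto
          qed
          define \<rho>3 where "\<rho>3 = \<rho>(b := m, d := d)"
          have t3: "\<rho>3 \<in> transf n" unfolding \<rho>3_def using transf_upd2[OF transf_upd2[OF t b(1) m(1)] dn dn] .
          have "\<rho>3 m = \<rho>3 c" using bm dm bc dc rmc rc unfolding \<rho>3_def by auto
          then have ni3: "\<not> inj_on \<rho>3 {0..<n}" using cm m(1) cn unfolding inj_on_def by (metis atLeastLessThan_iff zero_le)
          have "\<rho>3 \<in> M"
            using IH[OF t3 ni3] mv_less[of d n \<rho> \<rho>3] dn rd db bm d_def unfolding \<rho>3_def by auto
          moreover have r1: "rpl n m d \<in> M" using rep m(1) dn dm by auto
          moreover have r2: "rpl n d (\<rho> d) \<in> M" using rep dn rdn rd by auto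
          moreover have "\<rho> = restrict (rpl n m d \<circ> restrict (rpl n d (\<rho> d) \<circ> \<rho>3) {0..<n}) {0..<n}"
          proof (rule comp_eqI[OF rpl_transf[OF m(1) dn] transf_comp[OF rpl_transf[OF dn rdn] t3] t])
            fix l assume l: "l < n"
            have t3l: "\<rho>3 l < n" using transf_less[OF t3 l] .
            show "\<rho> l = rpl n m d (restrict (rpl n d (\<rho> d) \<circ> \<rho>3) {0..<n} l)"
            proof (cases "l = b")
              case True then show ?thesis using l db dm m(1) by (simp add: \<rho>3_def rpl_apply d_def)
            next
              case lb: False
              show ?thesis
              proof (cases "l = d")
                case True then show ?thesis using l dn rdn nm[of d] by (simp add: \<rho>3_def rpl_apply)
              next
                case False
                then have "\<rho>3 l = \<rho> l" using lb unfolding \<rho>3_def by auto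
                moreover have "\<rho> l \<noteq> d" using onlyb[OF l] lb by auto
                ultimately show ?thesis using l t3l nm[OF l] by (simp add: rpl_apply)
              qed
            qed
          qed
          ultimately show ?thesis using comp by metis
        qed
      qed
    qed
  qed
qed

lemma comb:
  fixes M :: "(nat \<Rightarrow> nat) set"
  assumes comp: "\<And>\<sigma> \<tau>. \<sigma> \<in> M \<Longrightarrow> \<tau> \<in> M \<Longrightarrow> restrict (\<sigma> \<circ> \<tau>) {0..<n} \<in> M"
    and rep: "\<And>i j. i < n \<Longrightarrow> j < n \<Longrightarrow> i \<noteq> j \<Longrightarrow> rpl n j i \<in> M"
    and sub: "M \<subseteq> transf n"
    and "\<rho> \<in> transf n" "\<not> inj_on \<rho> {0..<n}"
  shows "\<rho> \<in> M"
  using comb_aux[OF comp rep sub] assms(4,5) by blast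


locale prehom = peagen +
  fixes B :: "'c set" and f :: "'a \<Rightarrow> (nat \<Rightarrow> 'c) set"
  assumes f_sub: "\<And>x. x \<in> pcar D \<Longrightarrow> f x \<subseteq> {0..<n} \<rightarrow>\<^sub>E B"
    and f_zero: "f (pzero D) = {}"
    and f_one: "f (pone D) = {0..<n} \<rightarrow>\<^sub>E B"
    and f_jn: "\<And>x y. x \<in> pcar D \<Longrightarrow> y \<in> pcar D \<Longrightarrow> f (pjoin D x y) = f x \<union> f y"
    and f_mt: "\<And>x y. x \<in> pcar D \<Longrightarrow> y \<in> pcar D \<Longrightarrow> f (pmeet D x y) = f x \<inter> f y"
    and f_cm: "\<And>x. x \<in> pcar D \<Longrightarrow> f (pcompl D x) = ({0..<n} \<rightarrow>\<^sub>E B) - f x"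
    and f_cy1: "\<And>k x. k < n \<Longrightarrow> x \<in> pcar D \<Longrightarrow>
        f (pcyl D {k} x) = {s \<in> {0..<n} \<rightarrow>\<^sub>E B. \<exists>t\<in>f x. \<forall>j<n. j \<noteq> k \<longrightarrow> s j = t j}"
    and f_dg: "\<And>i j. i < n \<Longrightarrow> j < n \<Longrightarrow> f (pdiag D i j) = {s \<in> {0..<n} \<rightarrow>\<^sub>E B. s i = s j}"
begin

abbreviation "W \<equiv> {0..<n} \<rightarrow>\<^sub>E B"

definition "sub \<tau> X = {s \<in> W. (\<lambda>i\<in>{0..<n}. s (\<tau> i)) \<in> X}"

lemma W_upd: "s \<in> W \<Longrightarrow> k < n \<Longrightarrow> u \<in> B \<Longrightarrow> s(k := u) \<in> W"
  by (auto simp: PiE_def Pi_def extensional_def)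

lemma W_eq: "s \<in> W \<Longrightarrow> t \<in> W \<Longrightarrow> (\<And>i. i < n \<Longrightarrow> s i = t i) \<Longrightarrow> s = t"
  by (rule extensionalityI[of _ "{0..<n}"]) (auto simp: PiE_def)

lemma f_ple: "ple D a b \<Longrightarrow> a \<in> car \<Longrightarrow> b \<in> car \<Longrightarrow> f a \<subseteq> f b"
  unfolding ple_def using f_mt by (metis inf.cobounded2)

lemma f_cyl_inv: assumes "x \<in> car" "k < n" "cy {k} x = x" "s \<in> f x" "t \<in> W" "\<And>j. j < n \<Longrightarrow> j \<noteq> k \<Longrightarrow> s j = t j"
  shows "t \<in> f x"
proof -
  have "\<forall>j<n. j \<noteq> k \<longrightarrow> t j = s j" using assms(6) by auto
  then have "t \<in> f (cy {k} x)" using f_cy1[OF assms(2,1)] assms(4,5) by blast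
  then show ?thesis using assms(3) by simp
qed

lemma f_cy: assumes "\<Gamma> \<subseteq> {0..<n}" "x \<in> car"
  shows "f (cy \<Gamma> x) = {s \<in> W. \<exists>t\<in>f x. \<forall>i\<in>{0..<n} - \<Gamma>. s i = t i}"
proof -
  have fin: "finite \<Gamma>" using assms(1) finite_subset by blast
  show ?thesis using fin assms(1)
  proof (induction \<Gamma> rule: finite_induct)
    case empty
    have "f x = {s \<in> W. \<exists>t\<in>f x. \<forall>i\<in>{0..<n} - {}. s i = t i}"
    proof
      show "f x \<subseteq> {s \<in> W. \<exists>t\<in>f x. \<forall>i\<in>{0..<n} - {}. s i = t i}" using f_sub[OF assms(2)] by auto
      show "{s \<in> W. \<exists>t\<in>f x. \<forall>i\<in>{0..<n} - {}. s i = t i} \<subseteq> f x"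
      proof
        fix s assume "s \<in> {s \<in> W. \<exists>t\<in>f x. \<forall>i\<in>{0..<n} - {}. s i = t i}"
        then obtain t where "s \<in> W" "t \<in> f x" "\<forall>i\<in>{0..<n}. s i = t i" by auto
        moreover then have "s = t" using W_eq[of s t] f_sub[OF assms(2)] by auto
        ultimately show "s \<in> f x" by simp
      qed
    qed
    then show ?case using cy_empty[OF assms(2)] by simp
  next
    case (insert k \<Gamma>)
    have kn: "k < n" and G: "\<Gamma> \<subseteq> {0..<n}" using insert by auto
    have e: "cy (insert k \<Gamma>) x = cy {k} (cy \<Gamma> x)" using cy_union[of "{k}" \<Gamma> x] kn G assms(2) by auto
    have IH: "f (cy \<Gamma> x) = {s \<in> W. \<exists>t\<in>f x. \<forall>i\<in>{0..<n} - \<Gamma>. s i = t i}" using insert G by auto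
    have cG: "cy \<Gamma> x \<in> car" using cy_car[OF G assms(2)] .
    show ?case
    proof -
      have "f (cy (insert k \<Gamma>) x) = {s \<in> W. \<exists>t1\<in>f (cy \<Gamma> x). \<forall>j<n. j \<noteq> k \<longrightarrow> s j = t1 j}"
        using e f_cy1[OF kn cG] by simp
      also have "\<dots> = {s \<in> W. \<exists>t\<in>f x. \<forall>i\<in>{0..<n} - insert k \<Gamma>. s i = t i}"
      proof (intro Collect_cong conj_cong refl iffI)
        fix s assume s: "s \<in> W"
        { assume "\<exists>t1\<in>f (cy \<Gamma> x). \<forall>j<n. j \<noteq> k \<longrightarrow> s j = t1 j"
          then obtain t1 where t1: "t1 \<in> f (cy \<Gamma> x)" "\<forall>j<n. j \<noteq> k \<longrightarrow> s j = t1 j" by auto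
          then obtain t where "t \<in> f x" "\<forall>i\<in>{0..<n} - \<Gamma>. t1 i = t i" using IH by auto
          then show "\<exists>t\<in>f x. \<forall>i\<in>{0..<n} - insert k \<Gamma>. s i = t i" using t1 by auto }
        { assume "\<exists>t\<in>f x. \<forall>i\<in>{0..<n} - insert k \<Gamma>. s i = t i"
          then obtain t where t: "t \<in> f x" "\<forall>i\<in>{0..<n} - insert k \<Gamma>. s i = t i" by auto
          have tW: "t \<in> W" using t(1) f_sub[OF assms(2)] by auto
          then have tk: "t k \<in> B" using kn by auto
          let ?t1 = "s(k := t k)"
          have t1W: "?t1 \<in> W" using W_upd[OF s kn tk] .
          have "?t1 \<in> f (cy \<Gamma> x)" unfolding IH using t1W t by auto
          then show "\<exists>t1\<in>f (cy \<Gamma> x). \<forall>j<n. j \<noteq> k \<longrightarrow> s j = t1 j" by (intro bexI[of _ ?t1]) auto }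
      qed
      finally show ?thesis .
    qed
  qed
qed

lemma sub_W: "\<tau> \<in> transf n \<Longrightarrow> s \<in> W \<Longrightarrow> (\<lambda>i\<in>{0..<n}. s (\<tau> i)) \<in> W"
  using transf_less by (auto simp: PiE_def Pi_def)

lemma sub_comp: assumes "\<sigma> \<in> transf n" "\<tau> \<in> transf n"
  shows "sub \<sigma> (sub \<tau> X) = sub (restrict (\<sigma> \<circ> \<tau>) {0..<n}) X"
proof -
  have "\<And>s. s \<in> W \<Longrightarrow> (\<lambda>l\<in>{0..<n}. (\<lambda>i\<in>{0..<n}. s (\<sigma> i)) (\<tau> l)) = (\<lambda>i\<in>{0..<n}. s (restrict (\<sigma> \<circ> \<tau>) {0..<n} i))"
    using transf_less[OF assms(2)] by (auto intro!: restrict_ext)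
  then show ?thesis unfolding sub_def using sub_W[OF assms(1)] by auto
qed

lemma f_rpl: assumes "i < n" "j < n" "x \<in> car"
  shows "f (sb (rpl n j i) x) = sub (rpl n j i) (f x)"
proof (cases "i = j")
  case True
  then have r: "rpl n j i = restrict id {0..<n}" unfolding rpl_def using assms(2) by (auto simp: fun_eq_iff)
  have "\<And>s. s \<in> W \<Longrightarrow> (\<lambda>l\<in>{0..<n}. s (restrict id {0..<n} l)) = s"
    by (rule W_eq) (auto simp: PiE_def Pi_def)
  then show ?thesis unfolding r sub_def sb_id[OF assms(3)] using f_sub[OF assms(3)] by auto
next
  case False
  let ?t = "rpl n j i"
  have t: "?t \<in> transf n" using rpl_transf assms by auto
  have y: "sb ?t x \<in> car" using sb_car[OF t assms(3)] .
  have cyy: "cy {j} (sb ?t x) = sb ?t x"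
    using cy_sb_notin[OF t assms(3) assms(2)] False by (auto simp: rpl_def)
  have E: "f x \<inter> f (dg i j) \<subseteq> f (sb ?t x)"
    using f_ple[OF E3[OF assms(1,2,3)]] mt_car[OF assms(3) dg_car[OF assms(1,2)]] sb_car[OF t assms(3)]
      f_mt[OF assms(3) dg_car[OF assms(1,2)]] unfolding rpl_def by auto
  have E': "f (sb ?t x) \<inter> f (dg i j) \<subseteq> f x"
  proof -
    have cx: "cm x \<in> car" using cm_car[OF assms(3)] .
    have "f (cm x) \<inter> f (dg i j) \<subseteq> f (sb ?t (cm x))"
      using f_ple[OF E3[OF assms(1,2) cx]] mt_car[OF cx dg_car[OF assms(1,2)]] sb_car[OF t cx]
        f_mt[OF cx dg_car[OF assms(1,2)]] unfolding rpl_def by auto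
    also have "\<dots> = W - f (sb ?t x)" using sb_cm[OF t assms(3)] f_cm[OF y] by simp
    finally show ?thesis using f_cm[OF assms(3)] f_sub[OF y] by auto
  qed
  have sw: "\<And>s. s \<in> W \<Longrightarrow> (\<lambda>l\<in>{0..<n}. s (?t l)) = s(j := s i)"
  proof -
    fix s assume sW: "s \<in> W"
    have "s i \<in> B" using sW assms(1) by auto
    then have "s(j := s i) \<in> W" using W_upd[OF sW assms(2)] by simp
    then show "(\<lambda>l\<in>{0..<n}. s (?t l)) = s(j := s i)"
      by (rule W_eq[OF sub_W[OF t sW]]) (auto simp: rpl_apply)
  qed
  show ?thesis
  proof
    show "f (sb ?t x) \<subseteq> sub ?t (f x)"
    proof
      fix s assume s: "s \<in> f (sb ?t x)"
      have sW: "s \<in> W" using s f_sub[OF y] by auto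
      have siB: "s i \<in> B" using sW assms(1) by auto
      have s'W: "s(j := s i) \<in> W" using W_upd[OF sW assms(2) siB] .
      have "s(j := s i) \<in> f (sb ?t x)" using f_cyl_inv[OF y assms(2) cyy s s'W] by auto
      moreover have "s(j := s i) \<in> f (dg i j)" using f_dg[OF assms(1,2)] s'W by auto
      ultimately have "s(j := s i) \<in> f x" using E' by auto
      then show "s \<in> sub ?t (f x)" unfolding sub_def using sw[OF sW] sW by auto
    qed
    show "sub ?t (f x) \<subseteq> f (sb ?t x)"
    proof
      fix s assume s: "s \<in> sub ?t (f x)"
      have sW: "s \<in> W" using s unfolding sub_def by auto
      have siB: "s i \<in> B" using sW assms(1) by auto
      have s'W: "s(j := s i) \<in> W" using W_upd[OF sW assms(2) siB] .
      have "s(j := s i) \<in> f x" using s sw[OF sW] unfolding sub_def by auto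
      moreover have "s(j := s i) \<in> f (dg i j)" using f_dg[OF assms(1,2)] s'W by auto
      ultimately have "s(j := s i) \<in> f (sb ?t x)" using E by auto
      then show "s \<in> f (sb ?t x)" using f_cyl_inv[OF y assms(2) cyy _ sW] by auto
    qed
  qed
qed

definition "MM = {\<tau> \<in> transf n. \<forall>z\<in>car. f (sb \<tau> z) = sub \<tau> (f z)}"

lemma MM_noninj: assumes "\<rho> \<in> transf n" "\<not> inj_on \<rho> {0..<n}" shows "\<rho> \<in> MM"
proof (rule comb[OF _ _ _ assms])
  fix \<sigma> \<tau> assume s: "\<sigma> \<in> MM" and t: "\<tau> \<in> MM"
  have st: "\<sigma> \<in> transf n" "\<tau> \<in> transf n" using s t unfolding MM_def by auto
  show "restrict (\<sigma> \<circ> \<tau>) {0..<n} \<in> MM"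
    unfolding MM_def
  proof (intro CollectI conjI ballI)
    show "restrict (\<sigma> \<circ> \<tau>) {0..<n} \<in> transf n" using transf_comp[OF st] .
    fix z assume z: "z \<in> car"
    have "f (sb (restrict (\<sigma> \<circ> \<tau>) {0..<n}) z) = f (sb \<sigma> (sb \<tau> z))" using sb_comp[OF st z] by simp
    also have "\<dots> = sub \<sigma> (f (sb \<tau> z))" using s sb_car[OF st(2) z] unfolding MM_def by auto
    also have "\<dots> = sub \<sigma> (sub \<tau> (f z))" using t z unfolding MM_def by auto
    finally show "f (sb (restrict (\<sigma> \<circ> \<tau>) {0..<n}) z) = sub (restrict (\<sigma> \<circ> \<tau>) {0..<n}) (f z)"
      using sub_comp[OF st] by simp
  qed
next
  fix i j assume "i < n" "j < n" "i \<noteq> j"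
  then show "rpl n j i \<in> MM" unfolding MM_def using rpl_transf f_rpl by auto
next
  show "MM \<subseteq> transf n" unfolding MM_def by auto
qed

lemma f_sb: assumes t: "\<tau> \<in> transf n" and x: "x \<in> car"
  shows "f (sb \<tau> x) = sub \<tau> (f x)"
proof -
  define P where "P = {x \<in> car. \<forall>\<tau>\<in>transf n. f (sb \<tau> x) = sub \<tau> (f x)}"
  have "x \<in> P"
  proof (rule gen_lemma[OF _ _ _ _ x])
    show "GG \<subseteq> P"
    proof
      fix x assume "x \<in> GG"
      then obtain k where xc: "x \<in> car" and k: "k < n" "cy {k} x = x" unfolding GG_iff by auto
      obtain m where m: "m < n" "m \<noteq> k" using exists_other[OF k(1) k(1)] by auto
      have "f (sb \<tau> x) = sub \<tau> (f x)" if t: "\<tau> \<in> transf n" for \<tau>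
      proof -
        let ?t = "\<tau>(k := \<tau> m)"
        have t': "?t \<in> transf n" using transf_upd2[OF t k(1) transf_less[OF t m(1)]] .
        have ni: "\<not> inj_on ?t {0..<n}" unfolding inj_on_def using m k by (intro notI) (metis atLeastLessThan_iff fun_upd_other fun_upd_same zero_le)
        have "sb \<tau> (cy {k} x) = sb ?t (cy {k} x)" by (rule sb_cy_agree) (use k t t' xc in auto)
        then have e1: "sb \<tau> x = sb ?t x" using k by simp
        have e2: "sub \<tau> (f x) = sub ?t (f x)"
        proof -
          have "(\<lambda>i\<in>{0..<n}. s (\<tau> i)) \<in> f x \<longleftrightarrow> (\<lambda>i\<in>{0..<n}. s (?t i)) \<in> f x" if sW: "s \<in> W" for s
          proof
            assume a: "(\<lambda>i\<in>{0..<n}. s (\<tau> i)) \<in> f x"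
            show "(\<lambda>i\<in>{0..<n}. s (?t i)) \<in> f x" by (rule f_cyl_inv[OF xc k a sub_W[OF t' sW]]) auto
          next
            assume a: "(\<lambda>i\<in>{0..<n}. s (?t i)) \<in> f x"
            show "(\<lambda>i\<in>{0..<n}. s (\<tau> i)) \<in> f x" by (rule f_cyl_inv[OF xc k a sub_W[OF t sW]]) auto
          qed
          then show ?thesis unfolding sub_def by auto
        qed
        show ?thesis using MM_noninj[OF t' ni] xc e1 e2 unfolding MM_def by auto
      qed
      then show "x \<in> P" unfolding P_def using xc by auto
    qed
  next
    fix x y assume xy: "x \<in> P" "y \<in> P" "x \<in> car" "y \<in> car"
    show "jn x y \<in> P" unfolding P_def
    proof (intro CollectI conjI ballI)
      show "jn x y \<in> car" using jn_car xy by auto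
      fix \<tau> assume t: "\<tau> \<in> transf n"
      have "f (sb \<tau> (jn x y)) = f (sb \<tau> x) \<union> f (sb \<tau> y)"
        using sb_jn[OF t xy(3,4)] f_jn sb_car[OF t] xy by auto
      also have "\<dots> = sub \<tau> (f x) \<union> sub \<tau> (f y)" using xy t unfolding P_def by auto
      finally show "f (sb \<tau> (jn x y)) = sub \<tau> (f (jn x y))" using f_jn[OF xy(3,4)] unfolding sub_def by auto
    qed
    show "mt x y \<in> P" unfolding P_def
    proof (intro CollectI conjI ballI)
      show "mt x y \<in> car" using mt_car xy by auto
      fix \<tau> assume t: "\<tau> \<in> transf n"
      have "f (sb \<tau> (mt x y)) = f (sb \<tau> x) \<inter> f (sb \<tau> y)"
        using sb_mt[OF t xy(3,4)] f_mt sb_car[OF t] xy by auto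
      also have "\<dots> = sub \<tau> (f x) \<inter> sub \<tau> (f y)" using xy t unfolding P_def by auto
      finally show "f (sb \<tau> (mt x y)) = sub \<tau> (f (mt x y))" using f_mt[OF xy(3,4)] unfolding sub_def by auto
    qed
  next
    fix x assume x: "x \<in> P" "x \<in> car"
    show "cm x \<in> P" unfolding P_def
    proof (intro CollectI conjI ballI)
      show "cm x \<in> car" using cm_car x by auto
      fix \<tau> assume t: "\<tau> \<in> transf n"
      have "f (sb \<tau> (cm x)) = W - f (sb \<tau> x)"
        using sb_cm[OF t x(2)] f_cm sb_car[OF t] x by auto
      also have "\<dots> = W - sub \<tau> (f x)" using x t unfolding P_def by auto
      finally show "f (sb \<tau> (cm x)) = sub \<tau> (f (cm x))" using f_cm[OF x(2)] sub_W[OF t] unfolding sub_def by blast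
    qed
  qed
  then show ?thesis using t unfolding P_def by auto
qed

lemma pea_hom: "pea_set_hom n D B f"
  unfolding pea_set_hom_def Let_def
proof (intro conjI allI impI ballI)
  show "\<And>x. x \<in> car \<Longrightarrow> f x \<subseteq> W" using f_sub .
  show "f (pzero D) = {}" by (rule f_zero)
  show "f (pone D) = W" by (rule f_one)
  show "\<And>x y. x \<in> car \<Longrightarrow> y \<in> car \<Longrightarrow> f (jn x y) = f x \<union> f y" using f_jn .
  show "\<And>x y. x \<in> car \<Longrightarrow> y \<in> car \<Longrightarrow> f (mt x y) = f x \<inter> f y" using f_mt .
  show "\<And>x. x \<in> car \<Longrightarrow> f (cm x) = W - f x" using f_cm .
  show "\<And>\<Gamma> x. \<Gamma> \<subseteq> {0..<n} \<Longrightarrow> x \<in> car \<Longrightarrow> f (cy \<Gamma> x) = {s \<in> W. \<exists>t\<in>f x. \<forall>i\<in>{0..<n} - \<Gamma>. s i = t i}"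
    using f_cy .
  show "\<And>i j. i < n \<Longrightarrow> j < n \<Longrightarrow> f (dg i j) = {s \<in> W. s i = s j}" using f_dg .
  show "\<And>\<tau> x. \<tau> \<in> transf n \<Longrightarrow> x \<in> car \<Longrightarrow> f (sb \<tau> x) = {s \<in> W. (\<lambda>i\<in>{0..<n}. s (\<tau> i)) \<in> f x}"
    using f_sb unfolding sub_def .
qed

end


locale dfrep = peagen +
  fixes U :: "nat \<Rightarrow> 'b set" and h :: "'a \<Rightarrow> (nat \<Rightarrow> 'b) set"
  assumes hom: "df_set_hom n D U h"
    and Vne: "Pi\<^sub>E {0..<n} U \<noteq> {}"
begin

abbreviation "V \<equiv> Pi\<^sub>E {0..<n} U"

lemma homs: "(\<forall>x\<in>car. h x \<subseteq> V) \<and>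
    h (pzero D) = {} \<and> h (pone D) = V \<and>
    (\<forall>x\<in>car. \<forall>y\<in>car. h (jn x y) = h x \<union> h y \<and> h (mt x y) = h x \<inter> h y) \<and>
    (\<forall>x\<in>car. h (cm x) = V - h x) \<and>
    (\<forall>i<n. \<forall>x\<in>car.
        h (pc D i x) = {s\<in>V. \<exists>t\<in>h x. \<forall>j\<in>{0..<n}. j \<noteq> i \<longrightarrow> s j = t j})"
  using hom unfolding df_set_hom_def Let_def .

lemmas hs1 = homs[THEN conjunct1]
lemmas hs2 = homs[THEN conjunct2, THEN conjunct1]
lemmas hs3 = homs[THEN conjunct2, THEN conjunct2, THEN conjunct1]
lemmas hs4 = homs[THEN conjunct2, THEN conjunct2, THEN conjunct2, THEN conjunct1]
lemmas hs5 = homs[THEN conjunct2, THEN conjunct2, THEN conjunct2, THEN conjunct2, THEN conjunct1]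
lemmas hs6 = homs[THEN conjunct2, THEN conjunct2, THEN conjunct2, THEN conjunct2, THEN conjunct2]

lemma h_sub: "x \<in> car \<Longrightarrow> h x \<subseteq> V" using hs1 by blast
lemma h_zero: "h (pzero D) = {}" using hs2 by blast
lemma h_one: "h (pone D) = V" using hs3 by blast
lemma h_jn: "x \<in> car \<Longrightarrow> y \<in> car \<Longrightarrow> h (jn x y) = h x \<union> h y" using hs4 by blast
lemma h_mt: "x \<in> car \<Longrightarrow> y \<in> car \<Longrightarrow> h (mt x y) = h x \<inter> h y" using hs4 by blast
lemma h_cm: "x \<in> car \<Longrightarrow> h (cm x) = V - h x" using hs5 by blast
lemma h_pc1: "k < n \<Longrightarrow> x \<in> car \<Longrightarrow> h (cy {k} x) = {s\<in>V. \<exists>t\<in>h x. \<forall>j<n. j \<noteq> k \<longrightarrow> s j = t j}"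
proof -
  assume a: "k < n" "x \<in> car"
  have e: "h (cy {k} x) = {s\<in>V. \<exists>t\<in>h x. \<forall>j\<in>{0..<n}. j \<noteq> k \<longrightarrow> s j = t j}" using hs6 a unfolding pc_def by blast
  show ?thesis unfolding e by (rule Collect_cong) auto
qed

lemma V_upd: "s \<in> V \<Longrightarrow> k < n \<Longrightarrow> u \<in> U k \<Longrightarrow> s(k := u) \<in> V"
  by (auto simp: PiE_def Pi_def extensional_def)

lemma V_eq: "s \<in> V \<Longrightarrow> t \<in> V \<Longrightarrow> (\<And>i. i < n \<Longrightarrow> s i = t i) \<Longrightarrow> s = t"
  by (rule extensionalityI[of _ "{0..<n}"]) (auto simp: PiE_def)

lemma V_U: "s \<in> V \<Longrightarrow> i < n \<Longrightarrow> s i \<in> U i" by auto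

lemma h_ple: "ple D a b \<Longrightarrow> a \<in> car \<Longrightarrow> b \<in> car \<Longrightarrow> h a \<subseteq> h b"
  unfolding ple_def using h_mt by (metis inf.cobounded2)

lemma h_cyl_inv: assumes "x \<in> car" "k < n" "cy {k} x = x" "s \<in> h x" "t \<in> V" "\<And>j. j < n \<Longrightarrow> j \<noteq> k \<Longrightarrow> s j = t j"
  shows "t \<in> h x"
proof -
  have "\<forall>j<n. j \<noteq> k \<longrightarrow> t j = s j" using assms(6) by auto
  then have "t \<in> h (cy {k} x)" using h_pc1[OF assms(2,1)] assms(4,5) by blast
  then show ?thesis using assms(3) by simp
qed

lemma h_cyl_multi: assumes "x \<in> car" "\<Gamma> \<subseteq> {0..<n}" "\<And>k. k \<in> \<Gamma> \<Longrightarrow> cy {k} x = x"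
  shows "\<forall>s t. s \<in> h x \<longrightarrow> t \<in> V \<longrightarrow> (\<forall>l<n. l \<notin> \<Gamma> \<longrightarrow> s l = t l) \<longrightarrow> t \<in> h x"
proof -
  have fin: "finite \<Gamma>" using assms(2) finite_subset by blast
  show ?thesis using fin assms(2,3)
  proof (induction \<Gamma> rule: finite_induct)
    case empty
    then show ?case using V_eq h_sub[OF assms(1)] by (metis empty_iff subsetD)
  next
    case (insert k \<Gamma>)
    have kn: "k < n" using insert by auto
    have ck: "cy {k} x = x" using insert by auto
    show ?case
    proof (intro allI impI)
      fix s t assume s: "s \<in> h x" and t: "t \<in> V" and ag: "\<forall>l<n. l \<notin> insert k \<Gamma> \<longrightarrow> s l = t l"
      have sV: "s \<in> V" using s h_sub[OF assms(1)] by auto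
      let ?tb = "t(k := s k)"
      have t1: "?tb \<in> V" using V_upd[OF t kn V_U[OF sV kn]] .
      have "?tb \<in> h x" using insert.IH insert.prems s t1 ag by auto
      then show "t \<in> h x" by (rule h_cyl_inv[OF assms(1) kn ck _ t]) auto
    qed
  qed
qed

lemma E3h: assumes "i < n" "j < n" "x \<in> car"
  shows "h x \<inter> h (dg i j) \<subseteq> h (sb (rpl n j i) x)"
  using h_ple[OF E3[OF assms]] mt_car[OF assms(3) dg_car[OF assms(1,2)]]
    sb_car[OF rpl_transf[OF assms(2,1)] assms(3)] h_mt[OF assms(3) dg_car[OF assms(1,2)]]
  unfolding rpl_def by auto

lemma E3h': assumes "i < n" "j < n" "x \<in> car"
  shows "h (sb (rpl n j i) x) \<inter> h (dg i j) \<subseteq> h x"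
proof -
  have t: "rpl n j i \<in> transf n" using rpl_transf assms by auto
  have cx: "cm x \<in> car" using cm_car[OF assms(3)] .
  have "h (cm x) \<inter> h (dg i j) \<subseteq> h (sb (rpl n j i) (cm x))" using E3h[OF assms(1,2) cx] .
  also have "\<dots> = V - h (sb (rpl n j i) x)" using sb_cm[OF t assms(3)] h_cm[OF sb_car[OF t assms(3)]] by simp
  finally show ?thesis using h_cm[OF assms(3)] h_sub[OF sb_car[OF t assms(3)]] by auto
qed

lemma dg_sym: assumes "i < n" "j < n" shows "h (dg i j) \<subseteq> h (dg j i)"
proof (cases "i = j")
  case True then show ?thesis by simp
next
  case False
  have t: "rpl n j i \<in> transf n" using rpl_transf assms by auto
  have y: "cm (dg j i) \<in> car" using cm_car dg_car assms by auto
  have "h (cm (dg j i)) \<inter> h (dg i j) \<subseteq> h (sb (rpl n j i) (cm (dg j i)))" using E3h[OF assms y] .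
  also have "sb (rpl n j i) (cm (dg j i)) = cm (dg i i)"
    using sb_cm[OF t dg_car[OF assms(2,1)]] sb_dg[OF t assms(2,1)] False assms by (simp add: rpl_apply)
  also have "h (cm (dg i i)) = {}" using h_cm dg_ii[OF assms(1)] h_one one_car by simp
  finally show ?thesis using h_cm[OF dg_car[OF assms(2,1)]] h_sub[OF dg_car[OF assms]] by auto
qed

lemma dg_trans: assumes "i < n" "j < n" "k < n" shows "h (dg i k) \<inter> h (dg k j) \<subseteq> h (dg i j)"
proof (cases "i = j")
  case True
  have "h (dg i j) = V" using True dg_ii h_one assms by simp
  then show ?thesis using h_sub[OF dg_car[OF assms(1,3)]] by auto
next
  case False
  have t: "rpl n j k \<in> transf n" using rpl_transf assms by auto
  have y: "cm (dg i j) \<in> car" using cm_car dg_car assms by auto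
  have "h (cm (dg i j)) \<inter> h (dg k j) \<subseteq> h (sb (rpl n j k) (cm (dg i j)))" using E3h[OF assms(3,2) y] .
  also have "sb (rpl n j k) (cm (dg i j)) = cm (dg i k)"
    using sb_cm[OF t dg_car[OF assms(1,2)]] sb_dg[OF t assms(1,2)] False assms by (simp add: rpl_apply)
  also have "h (cm (dg i k)) = V - h (dg i k)" using h_cm dg_car assms by simp
  finally show ?thesis using h_cm[OF dg_car[OF assms(1,2)]] h_sub[OF dg_car[OF assms(1,3)]] by auto
qed

lemma dg_tot: assumes "i < n" "j < n" "i \<noteq> j" "s \<in> V" shows "\<exists>u\<in>U i. s(i := u) \<in> h (dg i j)"
proof -
  let ?t = "rpl n i j"
  have t: "?t \<in> transf n" using rpl_transf assms by auto
  have d: "dg i j \<in> car" using dg_car assms by auto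
  let ?c = "cy {i} (dg i j)"
  have c: "?c \<in> car" using cy_car1[OF assms(1) d] .
  have e1: "sb ?t (dg i j) = pone D" using sb_dg[OF t assms(1,2)] dg_ii[OF assms(2)] assms by (simp add: rpl_apply)
  have e2: "sb ?t ?c = ?c"
  proof -
    have "sb ?t ?c = sb (restrict id {0..<n}) ?c"
      by (rule sb_cy_agree) (use assms t id_transf d in \<open>auto simp: rpl_apply\<close>)
    then show ?thesis using sb_id[OF c] by simp
  qed
  have "jn (dg i j) ?c = ?c" using cy_ext[of "{i}" "dg i j"] assms d by auto
  then have "sb ?t (jn (dg i j) ?c) = ?c" using e2 by simp
  then have "jn (pone D) ?c = ?c" using sb_jn[OF t d c] e1 e2 by simp
  then have "V \<subseteq> h ?c" using h_jn[OF one_car c] h_one by auto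
  then obtain t' where t': "t' \<in> h (dg i j)" "\<forall>l<n. l \<noteq> i \<longrightarrow> s l = t' l" using assms(4) h_pc1[OF assms(1) d] by auto
  have tV: "t' \<in> V" using t' h_sub[OF d] by auto
  have "s(i := t' i) = t'" by (rule V_eq[OF V_upd[OF assms(4) assms(1) V_U[OF tV assms(1)]] tV]) (use t' in auto)
  then show ?thesis using t' V_U[OF tV assms(1)] by metis
qed

lemma dg_cyl: assumes "i < n" "j < n" "s \<in> h (dg i j)" "t \<in> V" "t i = s i" "t j = s j"
  shows "t \<in> h (dg i j)"
proof -
  have "\<forall>s t. s \<in> h (dg i j) \<longrightarrow> t \<in> V \<longrightarrow> (\<forall>l<n. l \<notin> {0..<n} - {i, j} \<longrightarrow> s l = t l) \<longrightarrow> t \<in> h (dg i j)"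
    by (rule h_cyl_multi) (use dg_cy_other dg_car assms in auto)
  then show ?thesis using assms by auto
qed

lemma C7h: assumes "i < n" "j < n" "i \<noteq> j" "x \<in> car" "s \<in> V" "u \<in> U i" "u' \<in> U i"
    "s(i := u) \<in> h (dg i j)" "s(i := u') \<in> h (dg i j)" "s(i := u) \<in> h x"
  shows "s(i := u') \<in> h x"
proof -
  let ?t = "rpl n i j"
  have t: "?t \<in> transf n" using rpl_transf assms by auto
  have y: "sb ?t x \<in> car" using sb_car[OF t assms(4)] .
  have cyy: "cy {i} (sb ?t x) = sb ?t x"
    using cy_sb_notin[OF t assms(4) assms(1)] assms(3) by (auto simp: rpl_apply)
  have "s(i := u) \<in> h (sb ?t x)" using E3h[OF assms(2,1,4)] assms(10) dg_sym[OF assms(1,2)] assms(8) by auto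
  then have "s(i := u') \<in> h (sb ?t x)"
    by (rule h_cyl_inv[OF y assms(1) cyy _ V_upd[OF assms(5,1,7)]]) auto
  then show ?thesis using E3h'[OF assms(2,1,4)] dg_sym[OF assms(1,2)] assms(9) by auto
qed

definition "Eqv i u u' \<longleftrightarrow> u \<in> U i \<and> u' \<in> U i \<and> (\<forall>x\<in>car. \<forall>s\<in>V. s(i := u) \<in> h x \<longleftrightarrow> s(i := u') \<in> h x)"
definition "Rel i j u v \<longleftrightarrow> (\<exists>s\<in>V. s i = u \<and> s j = v \<and> s \<in> h (dg i j))"

lemma Eqv_refl: "u \<in> U i \<Longrightarrow> Eqv i u u" unfolding Eqv_def by auto
lemma Eqv_sym: "Eqv i u u' \<Longrightarrow> Eqv i u' u" unfolding Eqv_def by auto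
lemma Eqv_trans: "Eqv i u u' \<Longrightarrow> Eqv i u' u'' \<Longrightarrow> Eqv i u u''" unfolding Eqv_def by auto
lemma Eqv_U: "Eqv i u u' \<Longrightarrow> u \<in> U i \<and> u' \<in> U i" unfolding Eqv_def by auto

lemma Rel_mem: "i < n \<Longrightarrow> j < n \<Longrightarrow> Rel i j u v \<Longrightarrow> t \<in> V \<Longrightarrow> t i = u \<Longrightarrow> t j = v \<Longrightarrow> t \<in> h (dg i j)"
  unfolding Rel_def using dg_cyl by metis

lemma Rel_intro: "t \<in> V \<Longrightarrow> t \<in> h (dg i j) \<Longrightarrow> Rel i j (t i) (t j)"
  unfolding Rel_def by auto

lemma Rel_U: "i < n \<Longrightarrow> j < n \<Longrightarrow> Rel i j u v \<Longrightarrow> u \<in> U i \<and> v \<in> U j"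
  unfolding Rel_def by auto

lemma Rel_sym: "i < n \<Longrightarrow> j < n \<Longrightarrow> Rel i j u v \<Longrightarrow> Rel j i v u"
  unfolding Rel_def using dg_sym by blast

lemma some_V: "\<exists>s. s \<in> V" using Vne by auto

lemma Rel_tot: assumes "i < n" "j < n" "i \<noteq> j" "v \<in> U j" shows "\<exists>u. Rel i j u v"
proof -
  obtain s0 where s0: "s0 \<in> V" using some_V by auto
  have s: "s0(j := v) \<in> V" using V_upd[OF s0 assms(2,4)] .
  obtain u where u: "u \<in> U i" "(s0(j := v))(i := u) \<in> h (dg i j)" using dg_tot[OF assms(1-3) s] by auto
  have "Rel i j (((s0(j := v))(i := u)) i) (((s0(j := v))(i := u)) j)"
    by (rule Rel_intro[OF V_upd[OF s assms(1) u(1)] u(2)])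
  then show ?thesis using assms(3) by auto
qed

lemma Rel_eqv_left: assumes "i < n" "j < n" "i \<noteq> j" "Rel i j u v" "Eqv i u u'" shows "Rel i j u' v"
proof -
  obtain s where s: "s \<in> V" "s i = u" "s j = v" "s \<in> h (dg i j)" using assms(4) unfolding Rel_def by auto
  have "s(i := u) = s" using s by auto
  then have "s(i := u') \<in> h (dg i j)" using assms(5) s dg_car[OF assms(1,2)] unfolding Eqv_def by metis
  moreover have "s(i := u') \<in> V" using V_upd[OF s(1) assms(1)] assms(5) unfolding Eqv_def by auto
  ultimately show ?thesis unfolding Rel_def using s assms(3) by (intro bexI[of _ "s(i := u')"]) auto
qed

lemma EqR_dir: assumes ij: "i < n" "j < n" "i \<noteq> j" and R1: "Rel i j u1 v" and R2: "Rel i j u2 v"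
  and x: "x \<in> car" and k: "k < n" "cy {k} x = x" and s: "s \<in> V" and m: "s(i := u1) \<in> h x"
  shows "s(i := u2) \<in> h x"
proof -
  have u1: "u1 \<in> U i" and u2: "u2 \<in> U i" and v: "v \<in> U j" using Rel_U[OF ij(1,2)] R1 R2 by auto
  have C7v: "t(i := u2) \<in> h y" if "t \<in> V" "t j = v" "y \<in> car" "t(i := u1) \<in> h y" for t y
  proof (rule C7h[OF ij that(3) that(1) u1 u2 _ _ that(4)])
    show "t(i := u1) \<in> h (dg i j)" by (rule Rel_mem[OF ij(1,2) R1 V_upd[OF that(1) ij(1) u1]]) (use that ij in auto)
    show "t(i := u2) \<in> h (dg i j)" by (rule Rel_mem[OF ij(1,2) R2 V_upd[OF that(1) ij(1) u2]]) (use that ij in auto)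
  qed
  have s1: "s(i := u1) \<in> V" using V_upd[OF s ij(1) u1] .
  have s2: "s(i := u2) \<in> V" using V_upd[OF s ij(1) u2] .
  show ?thesis
  proof (cases "k = i")
    case True
    then show ?thesis using h_cyl_inv[OF x k m s2] by auto
  next
    case ki: False
    show ?thesis
    proof (cases "k = j")
      case True
      let ?t = "s(j := v)"
      have t: "?t \<in> V" using V_upd[OF s ij(2) v] .
      have "?t(i := u1) \<in> h x"
        by (rule h_cyl_inv[OF x k m V_upd[OF t ij(1) u1]]) (use True ij in auto)
      then have "?t(i := u2) \<in> h x" using C7v[OF t _ x] by auto
      then show ?thesis by (rule h_cyl_inv[OF x k _ s2]) (use True ij in auto)
    next
      case kj: False
      let ?t = "rpl n i k"
      have tt: "?t \<in> transf n" using rpl_transf ij k by auto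
      have y: "sb ?t x \<in> car" using sb_car[OF tt x] .
      have cyy: "cy {i} (sb ?t x) = sb ?t x"
        using cy_sb_notin[OF tt x ij(1)] ki by (auto simp: rpl_apply)
      obtain w where w: "w \<in> U k" "(s(i := u1))(k := w) \<in> h (dg k i)"
        using dg_tot[OF k(1) ij(1) ki s1] by auto
      let ?ta = "(s(i := u1))(k := w)"
      have t0V: "?ta \<in> V" using V_upd[OF s1 k(1) w(1)] .
      have t0x: "?ta \<in> h x" by (rule h_cyl_inv[OF x k m t0V]) auto
      have t0y: "?ta \<in> h (sb ?t x)" using E3h[OF k(1) ij(1) x] t0x w(2) by auto
      have t0'V: "?ta(i := u2) \<in> V" using V_upd[OF t0V ij(1) u2] .
      have t0'y: "?ta(i := u2) \<in> h (sb ?t x)" by (rule h_cyl_inv[OF y ij(1) cyy t0y t0'V]) auto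
      let ?tb = "?ta(j := v)"
      have t1V: "?tb \<in> V" using V_upd[OF t0V ij(2) v] .
      have t1d: "?tb \<in> h (dg k i)" by (rule dg_cyl[OF k(1) ij(1) w(2) t1V]) (use kj ij ki in auto)
      have "?tb(i := u1) = ?tb" using ij ki by auto
      then have "?tb(i := u2) \<in> h (dg k i)" using C7v[OF t1V _ dg_car[OF k(1) ij(1)]] t1d by auto
      then have "?ta(i := u2) \<in> h (dg k i)" by (rule dg_cyl[OF k(1) ij(1) _ t0'V]) (use kj ij ki in auto)
      then have "?ta(i := u2) \<in> h x" using E3h'[OF k(1) ij(1) x] t0'y by auto
      then show ?thesis by (rule h_cyl_inv[OF x k _ s2]) (use ki in auto)
    qed
  qed
qed

lemma EqR: assumes ij: "i < n" "j < n" "i \<noteq> j" and R1: "Rel i j u v" and R2: "Rel i j u' v"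
  shows "Eqv i u u'"
proof -
  define P where "P = {x \<in> car. \<forall>s\<in>V. s(i := u) \<in> h x \<longleftrightarrow> s(i := u') \<in> h x}"
  have u: "u \<in> U i" "u' \<in> U i" using Rel_U[OF ij(1,2)] R1 R2 by auto
  have "x \<in> P" if x: "x \<in> car" for x
  proof (rule gen_lemma[OF _ _ _ _ x])
    show "GG \<subseteq> P"
    proof
      fix x assume "x \<in> GG"
      then obtain k where x: "x \<in> car" and k: "k < n" "cy {k} x = x" unfolding GG_iff by auto
      show "x \<in> P" unfolding P_def using EqR_dir[OF ij R1 R2 x k] EqR_dir[OF ij R2 R1 x k] x by auto
    qed
  next
    fix x y assume "x \<in> P" "y \<in> P" "x \<in> car" "y \<in> car"
    then show "jn x y \<in> P" "mt x y \<in> P" unfolding P_def using h_jn h_mt jn_car mt_car by auto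
  next
    fix x assume "x \<in> P" "x \<in> car"
    then show "cm x \<in> P" unfolding P_def using h_cm cm_car V_upd[OF _ ij(1)] u by auto
  qed
  then show ?thesis unfolding Eqv_def P_def using u by auto
qed

end


context dfrep begin

definition "Q i a b \<longleftrightarrow> (i = 0 \<and> b = a) \<or> (i \<noteq> 0 \<and> Rel 0 i a b)"

lemma n0: "0 < n" using n3 by auto

lemma Q_U: "i < n \<Longrightarrow> a \<in> U 0 \<Longrightarrow> Q i a b \<Longrightarrow> b \<in> U i"
  unfolding Q_def using Rel_U[of 0 i a b] n0 by auto

lemma F1: assumes "i < n" "a \<in> U 0" shows "\<exists>b. Q i a b"
proof (cases "i = 0")
  case True then show ?thesis unfolding Q_def by auto
next
  case False
  obtain b where "Rel i 0 b a" using Rel_tot[OF assms(1) n0 False assms(2)] by auto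
  then have "Rel 0 i a b" by (rule Rel_sym[OF assms(1) n0])
  then show ?thesis unfolding Q_def using False by auto
qed

lemma F1': assumes "i < n" "b \<in> U i" shows "\<exists>a\<in>U 0. Q i a b"
proof (cases "i = 0")
  case True then show ?thesis unfolding Q_def using assms by auto
next
  case False
  obtain a where "Rel 0 i a b" using Rel_tot[OF n0 assms(1) False[symmetric] assms(2)] by auto
  then show ?thesis unfolding Q_def using False Rel_U[OF n0 assms(1)] by auto
qed

lemma Rel_eqv_right: assumes "i < n" "j < n" "i \<noteq> j" "Rel i j u v" "Eqv j v v'" shows "Rel i j u v'"
proof -
  have "Rel j i v' u" by (rule Rel_eqv_left[OF assms(2,1) _ Rel_sym[OF assms(1,2,4)] assms(5)]) (use assms(3) in auto)
  then show ?thesis by (rule Rel_sym[OF assms(2,1)])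
qed

lemma F2: assumes i: "i < n" and a: "a \<in> U 0" "a' \<in> U 0" and q: "Q i a b" "Q i a' b'"
  shows "Eqv 0 a a' \<longleftrightarrow> Eqv i b b'"
proof (cases "i = 0")
  case True then show ?thesis using q unfolding Q_def by auto
next
  case False
  have R: "Rel 0 i a b" "Rel 0 i a' b'" using q False unfolding Q_def by auto
  show ?thesis
  proof
    assume e: "Eqv 0 a a'"
    have "Rel 0 i a' b" using Rel_eqv_left[OF n0 i _ R(1) e] False by auto
    then have "Rel i 0 b a'" "Rel i 0 b' a'" using Rel_sym[OF n0 i \<open>Rel 0 i a' b\<close>] Rel_sym[OF n0 i R(2)] by blast+
    then show "Eqv i b b'" using EqR[OF i n0 False] by auto
  next
    assume e: "Eqv i b b'"
    have "Rel 0 i a b'" using Rel_eqv_right[OF n0 i _ R(1) e] False by auto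
    then show "Eqv 0 a a'" using EqR[OF n0 i _ _ R(2)] False by auto
  qed
qed

lemma Inv_dir: assumes x: "x \<in> car" and st: "s \<in> V" "t \<in> V" and e: "\<And>i. i < n \<Longrightarrow> Eqv i (s i) (t i)"
  and m: "s \<in> h x" shows "t \<in> h x"
proof -
  define mix where "mix m = (\<lambda>l. if l < m then t l else s l)" for m
  have mixV: "mix m \<in> V" for m using st unfolding mix_def by (auto simp: PiE_def Pi_def extensional_def)
  have "m \<le> n \<Longrightarrow> mix m \<in> h x" for m
  proof (induction m)
    case 0
    have "mix 0 = s" unfolding mix_def by auto
    then show ?case using m by simp
  next
    case (Suc m)
    then have mn: "m < n" by auto
    have IH: "mix m \<in> h x" using Suc by auto
    have "(mix m)(m := s m) = mix m" unfolding mix_def by auto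
    then have "(mix m)(m := t m) \<in> h x" using e[OF mn] IH mixV[of m] x unfolding Eqv_def by metis
    moreover have "(mix m)(m := t m) = mix (Suc m)" unfolding mix_def by auto
    ultimately show ?case by simp
  qed
  moreover have "mix n = t" using st unfolding mix_def by (auto simp: PiE_def extensional_def)
  ultimately show ?thesis by auto
qed

lemma Inv: assumes "x \<in> car" "s \<in> V" "t \<in> V" "\<And>i. i < n \<Longrightarrow> Eqv i (s i) (t i)"
  shows "s \<in> h x \<longleftrightarrow> t \<in> h x"
  using Inv_dir[OF assms] Inv_dir[OF assms(1,3,2)] assms(4) Eqv_sym by blast

lemma D0: assumes t: "t \<in> V" and j: "j < n" "j \<noteq> 0" and a: "a \<in> U 0" "a' \<in> U 0"
  and t0: "t 0 = a" and R: "Rel 0 j a' (t j)"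
  shows "t \<in> h (dg 0 j) \<longleftrightarrow> Eqv 0 a a'"
proof
  assume "t \<in> h (dg 0 j)"
  then have "Rel 0 j a (t j)" using Rel_intro[OF t] t0 by metis
  then show "Eqv 0 a a'" using EqR[OF n0 j(1) j(2)[symmetric] _ R] by auto
next
  assume "Eqv 0 a a'"
  then have "Rel 0 j a (t j)" using Rel_eqv_left[OF n0 j(1) j(2)[symmetric] R] Eqv_sym by blast
  then show "t \<in> h (dg 0 j)" using Rel_mem[OF n0 j(1) _ t t0] by auto
qed

lemma Dlem: assumes t: "t \<in> V" and ij: "i < n" "j < n" and a: "a \<in> U 0" "a' \<in> U 0"
  and q: "Q i a (t i)" "Q j a' (t j)"
  shows "t \<in> h (dg i j) \<longleftrightarrow> Eqv 0 a a'"
proof (cases "i = j")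
  case True
  have "Eqv i (t i) (t i)" using Eqv_refl V_U[OF t ij(1)] by auto
  then have "Eqv 0 a a'" using F2[OF ij(1) a q(1)] q(2) True by auto
  moreover have "t \<in> h (dg i j)" using True dg_ii[OF ij(1)] h_one t by simp
  ultimately show ?thesis by simp
next
  case ij_ne: False
  show ?thesis
  proof (cases "i = 0")
    case True
    then have t0: "t 0 = a" using q(1) unfolding Q_def by auto
    have R: "Rel 0 j a' (t j)" using q(2) ij_ne True unfolding Q_def by auto
    show ?thesis using D0[OF t ij(2) _ a t0 R] True ij_ne by auto
  next
    case i0: False
    show ?thesis
    proof (cases "j = 0")
      case True
      then have t0: "t 0 = a'" using q(2) unfolding Q_def by auto
      have R: "Rel 0 i a (t i)" using q(1) i0 unfolding Q_def by auto
      have "t \<in> h (dg i j) \<longleftrightarrow> t \<in> h (dg 0 i)" using dg_sym ij True by auto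
      also have "\<dots> \<longleftrightarrow> Eqv 0 a' a" using D0[OF t ij(1) i0 a(2,1) t0 R] .
      finally show ?thesis using Eqv_sym by blast
    next
      case j0: False
      have Ri: "Rel 0 i a (t i)" using q(1) i0 unfolding Q_def by auto
      have Rj: "Rel 0 j a' (t j)" using q(2) j0 unfolding Q_def by auto
      let ?t' = "t(0 := a)"
      have t'V: "?t' \<in> V" using V_upd[OF t n0 a(1)] .
      have t'i: "?t' \<in> h (dg 0 i)" by (rule Rel_mem[OF n0 ij(1) Ri t'V]) (use i0 in auto)
      show ?thesis
      proof
        assume "t \<in> h (dg i j)"
        then have "?t' \<in> h (dg i j)" by (rule dg_cyl[OF ij _ t'V]) (use i0 j0 in auto)
        then have "?t' \<in> h (dg 0 j)" using dg_trans[OF n0 ij(2) ij(1)] t'i by auto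
        then have "Rel 0 j a (t j)" using Rel_intro[OF t'V] j0 by fastforce
        then show "Eqv 0 a a'" using EqR[OF n0 ij(2) j0[symmetric] _ Rj] by auto
      next
        assume "Eqv 0 a a'"
        then have "Rel 0 j a (t j)" using Rel_eqv_left[OF n0 ij(2) j0[symmetric] Rj] Eqv_sym by blast
        then have "?t' \<in> h (dg 0 j)" by (rule Rel_mem[OF n0 ij(2) _ t'V]) (use j0 in auto)
        moreover have "?t' \<in> h (dg i 0)" using t'i dg_sym[OF n0 ij(1)] by auto
        ultimately have "?t' \<in> h (dg i j)" using dg_trans[OF ij(1,2) n0] by auto
        then show "t \<in> h (dg i j)" by (rule dg_cyl[OF ij _ t]) (use i0 j0 in auto)
      qed
    qed
  qed
qed

definition "cls a = {a' \<in> U 0. Eqv 0 a a'}"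
definition "BB = cls ` U 0"
definition "rp i X = (SOME b. b \<in> U i \<and> (\<exists>a\<in>X. Q i a b))"
definition "phi \<sigma> = (\<lambda>i\<in>{0..<n}. rp i (\<sigma> i))"
definition "g x = {\<sigma> \<in> {0..<n} \<rightarrow>\<^sub>E BB. phi \<sigma> \<in> h x}"

lemma cls_mem: "a \<in> U 0 \<Longrightarrow> a \<in> cls a" unfolding cls_def using Eqv_refl by auto

lemma BB_eqv: assumes "X \<in> BB" "a \<in> X" "a' \<in> X" shows "Eqv 0 a a'"
proof -
  obtain c where c: "X = cls c" using assms(1) unfolding BB_def by auto
  have "Eqv 0 c a" "Eqv 0 c a'" using assms(2,3) unfolding c cls_def by auto
  then show ?thesis using Eqv_sym Eqv_trans by metis
qed

lemma BB_sub: "X \<in> BB \<Longrightarrow> X \<subseteq> U 0" unfolding BB_def cls_def by auto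

lemma BB_ne: "X \<in> BB \<Longrightarrow> \<exists>a. a \<in> X" unfolding BB_def using cls_mem by auto

lemma BB_eq: assumes "X \<in> BB" "Y \<in> BB" "a \<in> X" "a' \<in> Y" shows "X = Y \<longleftrightarrow> Eqv 0 a a'"
proof
  assume "X = Y" then show "Eqv 0 a a'" using BB_eqv assms by metis
next
  assume e: "Eqv 0 a a'"
  obtain c where c: "c \<in> U 0" "X = cls c" using assms(1) unfolding BB_def by auto
  obtain d where d: "d \<in> U 0" "Y = cls d" using assms(2) unfolding BB_def by auto
  have ca: "Eqv 0 c a" using assms(3) c unfolding cls_def by auto
  have da: "Eqv 0 d a'" using assms(4) d unfolding cls_def by auto
  have cd: "Eqv 0 c d" using Eqv_trans[OF Eqv_trans[OF ca e] Eqv_sym[OF da]] .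
  show "X = Y"
  proof (rule set_eqI)
    fix z
    show "z \<in> X \<longleftrightarrow> z \<in> Y"
    proof
      assume "z \<in> X" then have "Eqv 0 c z" "z \<in> U 0" using c unfolding cls_def by auto
      then have "Eqv 0 d z" using Eqv_trans[OF Eqv_sym[OF cd]] by auto
      then show "z \<in> Y" using d \<open>z \<in> U 0\<close> unfolding cls_def by auto
    next
      assume "z \<in> Y" then have "Eqv 0 d z" "z \<in> U 0" using d unfolding cls_def by auto
      then have "Eqv 0 c z" using Eqv_trans[OF cd] by auto
      then show "z \<in> X" using c \<open>z \<in> U 0\<close> unfolding cls_def by auto
    qed
  qed
qed

lemma rp_prop: assumes "X \<in> BB" "i < n" shows "rp i X \<in> U i \<and> (\<exists>a\<in>X. Q i a (rp i X))"
proof -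
  obtain a where a: "a \<in> X" using BB_ne[OF assms(1)] by auto
  have aU: "a \<in> U 0" using a BB_sub[OF assms(1)] by auto
  obtain b where b: "Q i a b" using F1[OF assms(2) aU] by auto
  have "b \<in> U i \<and> (\<exists>a\<in>X. Q i a b)" using b a Q_U[OF assms(2) aU b] by auto
  then show ?thesis unfolding rp_def by (rule someI)
qed

abbreviation "WB \<equiv> {0..<n} \<rightarrow>\<^sub>E BB"

lemma phi_V: "\<sigma> \<in> WB \<Longrightarrow> phi \<sigma> \<in> V"
  unfolding phi_def using rp_prop by (auto simp: PiE_def Pi_def)

lemma char: assumes x: "x \<in> car" and s: "\<sigma> \<in> WB" and t: "t \<in> V"
  and q: "\<And>i. i < n \<Longrightarrow> \<exists>a\<in>\<sigma> i. Q i a (t i)"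
  shows "\<sigma> \<in> g x \<longleftrightarrow> t \<in> h x"
proof -
  have "Eqv i (phi \<sigma> i) (t i)" if i: "i < n" for i
  proof -
    have X: "\<sigma> i \<in> BB" using s i by auto
    obtain a1 where a1: "a1 \<in> \<sigma> i" "Q i a1 (rp i (\<sigma> i))" using rp_prop[OF X i] by auto
    obtain a where a: "a \<in> \<sigma> i" "Q i a (t i)" using q[OF i] by auto
    have "Eqv 0 a1 a" using BB_eqv[OF X a1(1) a(1)] .
    then have "Eqv i (rp i (\<sigma> i)) (t i)" using F2[OF i _ _ a1(2) a(2)] BB_sub[OF X] a1 a by auto
    then show ?thesis unfolding phi_def using i by auto
  qed
  then have "phi \<sigma> \<in> h x \<longleftrightarrow> t \<in> h x" using Inv[OF x phi_V[OF s] t] by auto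
  then show ?thesis unfolding g_def using s by auto
qed

lemma g_point: assumes x: "x \<in> car" and t: "t \<in> h x" shows "\<exists>\<sigma>. \<sigma> \<in> g x"
proof -
  have tV: "t \<in> V" using t h_sub[OF x] by auto
  have "\<forall>i. \<exists>a. i < n \<longrightarrow> a \<in> U 0 \<and> Q i a (t i)" using F1' V_U[OF tV] by metis
  then obtain A where A: "\<And>i. i < n \<Longrightarrow> A i \<in> U 0 \<and> Q i (A i) (t i)" by metis
  define \<sigma> where "\<sigma> = (\<lambda>i\<in>{0..<n}. cls (A i))"
  have s: "\<sigma> \<in> WB" unfolding \<sigma>_def BB_def using A by auto
  have "\<sigma> \<in> g x" by (rule char[OF x s tV, THEN iffD2, OF _ t]) (use A cls_mem in \<open>auto simp: \<sigma>_def\<close>)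
  then show ?thesis by auto
qed

lemma g_sup: "h s = (\<Union>x\<in>X. h x) \<Longrightarrow> g s = (\<Union>x\<in>X. g x)"
  unfolding g_def by auto

lemma g_prehom: "prehom n D BB g"
proof (unfold_locales)
  show "\<And>x. x \<in> car \<Longrightarrow> g x \<subseteq> WB" unfolding g_def by auto
  show "g (pzero D) = {}" unfolding g_def h_zero by auto
  show "g (pone D) = WB" unfolding g_def h_one using phi_V by auto
  show "\<And>x y. x \<in> car \<Longrightarrow> y \<in> car \<Longrightarrow> g (jn x y) = g x \<union> g y" unfolding g_def using h_jn by auto
  show "\<And>x y. x \<in> car \<Longrightarrow> y \<in> car \<Longrightarrow> g (mt x y) = g x \<inter> g y" unfolding g_def using h_mt by auto
  show "\<And>x. x \<in> car \<Longrightarrow> g (cm x) = WB - g x" unfolding g_def using h_cm phi_V by auto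
next
  fix k x assume k: "k < n" and x: "x \<in> car"
  show "g (cy {k} x) = {s \<in> WB. \<exists>t\<in>g x. \<forall>j<n. j \<noteq> k \<longrightarrow> s j = t j}"
  proof
    show "g (cy {k} x) \<subseteq> {s \<in> WB. \<exists>t\<in>g x. \<forall>j<n. j \<noteq> k \<longrightarrow> s j = t j}"
    proof
      fix \<sigma> assume s: "\<sigma> \<in> g (cy {k} x)"
      have sW: "\<sigma> \<in> WB" using s unfolding g_def by auto
      have "phi \<sigma> \<in> h (cy {k} x)" using s unfolding g_def by auto
      then obtain t where t: "t \<in> h x" "\<forall>j<n. j \<noteq> k \<longrightarrow> phi \<sigma> j = t j" using h_pc1[OF k x] by auto
      have tV: "t \<in> V" using t h_sub[OF x] by auto
      obtain a where a: "a \<in> U 0" "Q k a (t k)" using F1'[OF k V_U[OF tV k]] by auto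
      let ?\<tau> = "\<sigma>(k := cls a)"
      have tW: "?\<tau> \<in> WB" using sW k a unfolding BB_def by (auto simp: PiE_def Pi_def extensional_def)
      have "?\<tau> \<in> g x"
      proof (rule char[OF x tW tV, THEN iffD2, OF _ t(1)])
        fix i assume i: "i < n"
        show "\<exists>a\<in>?\<tau> i. Q i a (t i)"
        proof (cases "i = k")
          case True then show ?thesis using a cls_mem by auto
        next
          case False
          then have "t i = rp i (\<sigma> i)" using t(2) i unfolding phi_def by auto
          moreover have "\<sigma> i \<in> BB" using sW i by auto
          ultimately show ?thesis using rp_prop[of "\<sigma> i" i] i False by auto
        qed
      qed
      then show "\<sigma> \<in> {s \<in> WB. \<exists>t\<in>g x. \<forall>j<n. j \<noteq> k \<longrightarrow> s j = t j}" using sW by (intro CollectI conjI bexI[of _ ?\<tau>]) auto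
    qed
    show "{s \<in> WB. \<exists>t\<in>g x. \<forall>j<n. j \<noteq> k \<longrightarrow> s j = t j} \<subseteq> g (cy {k} x)"
    proof
      fix \<sigma> assume "\<sigma> \<in> {s \<in> WB. \<exists>t\<in>g x. \<forall>j<n. j \<noteq> k \<longrightarrow> s j = t j}"
      then obtain \<tau> where sW: "\<sigma> \<in> WB" and t: "\<tau> \<in> g x" "\<forall>j<n. j \<noteq> k \<longrightarrow> \<sigma> j = \<tau> j" by auto
      have "phi \<tau> \<in> h x" using t unfolding g_def by auto
      moreover have "\<forall>j<n. j \<noteq> k \<longrightarrow> phi \<sigma> j = phi \<tau> j" using t(2) unfolding phi_def by auto
      ultimately have "phi \<sigma> \<in> h (cy {k} x)" using h_pc1[OF k x] phi_V[OF sW] by auto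
      then show "\<sigma> \<in> g (cy {k} x)" unfolding g_def using sW by auto
    qed
  qed
next
  fix i j assume ij: "i < n" "j < n"
  show "g (dg i j) = {s \<in> WB. s i = s j}"
  proof (intro set_eqI iffI)
    fix \<sigma> assume "\<sigma> \<in> g (dg i j)"
    then have sW: "\<sigma> \<in> WB" and m: "phi \<sigma> \<in> h (dg i j)" unfolding g_def by auto
    have X: "\<sigma> i \<in> BB" "\<sigma> j \<in> BB" using sW ij by auto
    obtain a where a: "a \<in> \<sigma> i" "Q i a (rp i (\<sigma> i))" using rp_prop[OF X(1) ij(1)] by auto
    obtain a' where a': "a' \<in> \<sigma> j" "Q j a' (rp j (\<sigma> j))" using rp_prop[OF X(2) ij(2)] by auto
    have "Eqv 0 a a'" using Dlem[OF phi_V[OF sW] ij, of a a'] m a a' ij BB_sub[OF X(1)] BB_sub[OF X(2)]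
      unfolding phi_def by auto
    then show "\<sigma> \<in> {s \<in> WB. s i = s j}" using BB_eq[OF X a(1) a'(1)] sW by auto
  next
    fix \<sigma> assume "\<sigma> \<in> {s \<in> WB. s i = s j}"
    then have sW: "\<sigma> \<in> WB" and e: "\<sigma> i = \<sigma> j" by auto
    have X: "\<sigma> i \<in> BB" "\<sigma> j \<in> BB" using sW ij by auto
    obtain a where a: "a \<in> \<sigma> i" "Q i a (rp i (\<sigma> i))" using rp_prop[OF X(1) ij(1)] by auto
    obtain a' where a': "a' \<in> \<sigma> j" "Q j a' (rp j (\<sigma> j))" using rp_prop[OF X(2) ij(2)] by auto
    have "Eqv 0 a a'" using BB_eq[OF X a(1) a'(1)] e by auto
    then have "phi \<sigma> \<in> h (dg i j)" using Dlem[OF phi_V[OF sW] ij, of a a'] a a' ij BB_sub[OF X(1)] BB_sub[OF X(2)]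
      unfolding phi_def by auto
    then show "\<sigma> \<in> g (dg i j)" unfolding g_def using sW by auto
  qed
qed

lemma g_hom: "pea_set_hom n D BB g"
  using prehom.pea_hom[OF g_prehom] .

end


lemma exists_pair_inj: "\<exists>f :: ('x \<times> nat) \<times> ('x \<times> nat) \<Rightarrow> 'x \<times> nat. inj f"
proof -
  have inf: "infinite (UNIV :: ('x \<times> nat) set)"
    by (metis UNIV_Times_UNIV finite_cartesian_productD2 infinite_UNIV_nat UNIV_not_empty)
  obtain f where "bij_betw f ((UNIV :: ('x \<times> nat) set) \<times> (UNIV :: ('x \<times> nat) set)) (UNIV :: ('x \<times> nat) set)"
    using card_of_ordIso card_of_Times_same_infinite[OF inf] by blast
  then have "inj f" unfolding bij_betw_def by simp
  then show ?thesis by blast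
qed

definition pp :: "('x \<times> nat) \<times> ('x \<times> nat) \<Rightarrow> 'x \<times> nat" where
  "pp = (SOME f. inj f)"

lemma pp_inj: "inj pp"
  unfolding pp_def using exists_pair_inj by (rule someI_ex)

definition tg :: "'x \<times> nat \<Rightarrow> 'x \<times> nat" where "tg v = (fst v, Suc (2 * snd v))"

lemma tg_inj: "tg u = tg v \<Longrightarrow> u = v" unfolding tg_def by (cases u, cases v) auto

primrec lenc :: "('x \<times> nat) list \<Rightarrow> 'x \<times> nat" where
  "lenc [] = (undefined, 0)"
| "lenc (v # vs) = tg (pp (v, lenc vs))"

lemma lenc_inj: "lenc xs = lenc ys \<Longrightarrow> xs = ys"
proof (induction xs arbitrary: ys)
  case Nil
  show ?case
  proof (cases ys)
    case (Cons w ws)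
    then have "snd (lenc ys) \<noteq> 0" by (simp add: tg_def)
    then show ?thesis using Nil.prems by (metis lenc.simps(1) snd_conv)
  qed simp
next
  case (Cons v vs)
  have "snd (lenc (v # vs)) \<noteq> 0" by (simp add: tg_def)
  then have "ys \<noteq> []" using Cons.prems by (metis lenc.simps(1) snd_conv)
  then obtain w ws where ys: "ys = w # ws" by (cases ys) simp_all
  have "tg (pp (v, lenc vs)) = tg (pp (w, lenc ws))" using Cons.prems ys by simp
  then have "pp (v, lenc vs) = pp (w, lenc ws)" by (rule tg_inj)
  then have "(v, lenc vs) = (w, lenc ws)" by (rule injD[OF pp_inj])
  then have "v = w" "lenc vs = lenc ws" by simp_all
  then show ?case using Cons.IH[of ws] ys by simp
qed

lemma map_inj_aux: "(\<And>c c'. c \<in> set cs \<Longrightarrow> f c = f c' \<Longrightarrow> c = c') \<Longrightarrow> map f cs = map f cs' \<Longrightarrow> cs = cs'"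
proof (induction cs arbitrary: cs')
  case Nil then show ?case by simp
next
  case (Cons c cs)
  from Cons.prems(2) obtain d ds where cs': "cs' = d # ds" by (cases cs') simp_all
  have "f c = f d" using Cons.prems(2) cs' by simp
  then have cd: "c = d" using Cons.prems(1) by simp
  have "map f cs = map f ds" using Cons.prems(2) cs' by simp
  then have "cs = ds" using Cons.IH Cons.prems(1) by (metis list.set_intros(2))
  then show ?case using cd cs' by simp
qed

datatype 'x code = Init nat | Wit "'x code list" nat 'x

primrec enc :: "'x code \<Rightarrow> 'x \<times> nat" where
  "enc (Init i) = (undefined, 2 * i)"
| "enc (Wit cs k x) = tg (pp ((x, k), lenc (map enc cs)))"

lemma enc_inj: "enc c = enc c' \<Longrightarrow> c = c'"
proof (induction c arbitrary: c')
  case (Init i)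
  show ?case
  proof (cases c')
    case (Wit cs k x)
    then have "odd (snd (enc c'))" by (simp add: tg_def)
    moreover have "snd (enc c') = 2 * i" using Init.prems by (metis enc.simps(1) snd_conv)
    ultimately show ?thesis by simp
  qed (use Init.prems in simp)
next
  case (Wit cs k x)
  have "\<not> (\<exists>j. c' = Init j)"
  proof
    assume "\<exists>j. c' = Init j"
    then obtain j where "c' = Init j" by auto
    then have "even (snd (enc c'))" by simp
    moreover have "odd (snd (enc (Wit cs k x)))" by (simp add: tg_def)
    ultimately show False using Wit.prems by metis
  qed
  then obtain cs' k' x' where c': "c' = Wit cs' k' x'" by (cases c') auto
  then have "tg (pp ((x, k), lenc (map enc cs))) = tg (pp ((x', k'), lenc (map enc cs')))" using Wit.prems by simp
  then have "pp ((x, k), lenc (map enc cs)) = pp ((x', k'), lenc (map enc cs'))" by (rule tg_inj)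
  then have "((x, k), lenc (map enc cs)) = ((x', k'), lenc (map enc cs'))" by (rule injD[OF pp_inj])
  then have e1: "x = x'" "k = k'" and e2: "lenc (map enc cs) = lenc (map enc cs')" by simp_all
  have "map enc cs = map enc cs'" using lenc_inj[OF e2] .
  then have "cs = cs'" by (rule map_inj_aux[rotated]) (rule Wit.IH)
  then show ?case using c' e1 by simp
qed

primrec dec :: "'c \<Rightarrow> ((nat \<Rightarrow> 'c) \<Rightarrow> nat \<Rightarrow> 'x \<Rightarrow> 'c) \<Rightarrow> (nat \<Rightarrow> 'c) \<Rightarrow> nat \<Rightarrow> 'x code \<Rightarrow> 'c" where
  "dec d w s0 n (Init i) = (if i < n then s0 i else d)"
| "dec d w s0 n (Wit cs k x) = w (\<lambda>i\<in>{0..<n}. if i < length cs then map (dec d w s0 n) cs ! i else d) k x"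

context peagen begin

lemma small_rep:
  fixes B :: "'c set" and g :: "'a \<Rightarrow> (nat \<Rightarrow> 'c) set"
  assumes hom: "pea_set_hom n D B g" and z: "z \<in> car" and s0: "\<sigma>0 \<in> g z"
    and sup: "\<forall>X s. X \<subseteq> car \<longrightarrow> is_sup D X s \<longrightarrow> g s = (\<Union>x\<in>X. g x)"
  shows "\<exists>(B'' :: ('a \<times> nat) set) f. pea_set_hom n D B'' f \<and>
     (\<forall>X s. X \<subseteq> car \<longrightarrow> is_sup D X s \<longrightarrow> f s = (\<Union>x\<in>X. f x)) \<and> f z \<noteq> {}"
proof -
  let ?W = "{0..<n} \<rightarrow>\<^sub>E B"
  have gs: "(\<forall>x\<in>car. g x \<subseteq> ?W) \<and>
    g (pzero D) = {} \<and> g (pone D) = ?W \<and>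
    (\<forall>x\<in>car. \<forall>y\<in>car. g (jn x y) = g x \<union> g y \<and> g (mt x y) = g x \<inter> g y) \<and>
    (\<forall>x\<in>car. g (cm x) = ?W - g x) \<and>
    (\<forall>\<Gamma>\<subseteq>{0..<n}. \<forall>x\<in>car.
        g (cy \<Gamma> x) = {s\<in>?W. \<exists>t\<in>g x. \<forall>i\<in>{0..<n} - \<Gamma>. s i = t i}) \<and>
    (\<forall>i<n. \<forall>j<n. g (dg i j) = {s\<in>?W. s i = s j}) \<and>
    (\<forall>\<tau>\<in>transf n. \<forall>x\<in>car.
        g (sb \<tau> x) = {s\<in>?W. (\<lambda>i\<in>{0..<n}. s (\<tau> i)) \<in> g x})"
    using hom unfolding pea_set_hom_def Let_def .
  have g_sub: "\<And>x. x \<in> car \<Longrightarrow> g x \<subseteq> ?W" using gs[THEN conjunct1] by blast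
  have g_zero: "g (pzero D) = {}" using gs[THEN conjunct2, THEN conjunct1] .
  have g_one: "g (pone D) = ?W" using gs[THEN conjunct2, THEN conjunct2, THEN conjunct1] .
  have g_jm: "\<And>x y. x \<in> car \<Longrightarrow> y \<in> car \<Longrightarrow> g (jn x y) = g x \<union> g y \<and> g (mt x y) = g x \<inter> g y"
    using gs[THEN conjunct2, THEN conjunct2, THEN conjunct2, THEN conjunct1] by blast
  have g_cm: "\<And>x. x \<in> car \<Longrightarrow> g (cm x) = ?W - g x"
    using gs[THEN conjunct2, THEN conjunct2, THEN conjunct2, THEN conjunct2, THEN conjunct1] by blast
  have g_cy: "\<And>\<Gamma> x. \<Gamma> \<subseteq> {0..<n} \<Longrightarrow> x \<in> car \<Longrightarrow> g (cy \<Gamma> x) = {s\<in>?W. \<exists>t\<in>g x. \<forall>i\<in>{0..<n} - \<Gamma>. s i = t i}"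
    using gs[THEN conjunct2, THEN conjunct2, THEN conjunct2, THEN conjunct2, THEN conjunct2, THEN conjunct1] by blast
  have g_dg: "\<And>i j. i < n \<Longrightarrow> j < n \<Longrightarrow> g (dg i j) = {s\<in>?W. s i = s j}"
    using gs[THEN conjunct2, THEN conjunct2, THEN conjunct2, THEN conjunct2, THEN conjunct2, THEN conjunct2, THEN conjunct1] by blast
  have g_cy1: "\<And>k x. k < n \<Longrightarrow> x \<in> car \<Longrightarrow> g (cy {k} x) = {s\<in>?W. \<exists>t\<in>g x. \<forall>j<n. j \<noteq> k \<longrightarrow> s j = t j}"
  proof -
    fix k x assume a: "k < n" "x \<in> car"
    have "g (cy {k} x) = {s\<in>?W. \<exists>t\<in>g x. \<forall>i\<in>{0..<n} - {k}. s i = t i}" using g_cy[of "{k}" x] a by auto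
    also have "\<dots> = {s\<in>?W. \<exists>t\<in>g x. \<forall>j<n. j \<noteq> k \<longrightarrow> s j = t j}" by (rule Collect_cong) auto
    finally show "g (cy {k} x) = {s\<in>?W. \<exists>t\<in>g x. \<forall>j<n. j \<noteq> k \<longrightarrow> s j = t j}" .
  qed
  have n0: "0 < n" using n3 by auto
  have s0W: "\<sigma>0 \<in> ?W" using s0 g_sub[OF z] by auto
  define wit where "wit \<sigma> k x = (if k < n \<and> x \<in> car \<and> (\<exists>\<tau>\<in>g x. \<forall>j<n. j \<noteq> k \<longrightarrow> \<sigma> j = \<tau> j)
       then (SOME \<tau>. \<tau> \<in> g x \<and> (\<forall>j<n. j \<noteq> k \<longrightarrow> \<sigma> j = \<tau> j)) k else \<sigma>0 0)" for \<sigma> k x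
  have wit_spec: "\<exists>\<tau>. \<tau> \<in> g x \<and> (\<forall>j<n. j \<noteq> k \<longrightarrow> \<sigma> j = \<tau> j) \<and> \<tau> k = wit \<sigma> k x"
    if "k < n" "x \<in> car" "\<exists>\<tau>\<in>g x. \<forall>j<n. j \<noteq> k \<longrightarrow> \<sigma> j = \<tau> j" for \<sigma> k x
  proof -
    let ?P = "\<lambda>\<tau>. \<tau> \<in> g x \<and> (\<forall>j<n. j \<noteq> k \<longrightarrow> \<sigma> j = \<tau> j)"
    have "\<exists>\<tau>. ?P \<tau>" using that(3) by auto
    then have P: "?P (SOME \<tau>. ?P \<tau>)" by (rule someI_ex)
    define t0 where "t0 = (SOME \<tau>. ?P \<tau>)"
    have P0: "?P t0" using P unfolding t0_def .
    have w: "wit \<sigma> k x = t0 k" unfolding wit_def t0_def using that by simp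
    show ?thesis
    proof (intro exI[of _ t0] conjI)
      show "t0 \<in> g x" using P0 by blast
      show "\<forall>j<n. j \<noteq> k \<longrightarrow> \<sigma> j = t0 j" using P0 by blast
      show "t0 k = wit \<sigma> k x" using w by simp
    qed
  qed
  have witB: "wit \<sigma> k x \<in> B" for \<sigma> k x
  proof (cases "k < n \<and> x \<in> car \<and> (\<exists>\<tau>\<in>g x. \<forall>j<n. j \<noteq> k \<longrightarrow> \<sigma> j = \<tau> j)")
    case True
    then obtain \<tau> where t: "\<tau> \<in> g x" "\<tau> k = wit \<sigma> k x" using wit_spec by blast
    have "\<tau> \<in> ?W" using t(1) g_sub True by auto
    then have "\<tau> k \<in> B" using True by auto
    then show ?thesis using t(2) by simp
  next
    case False then show ?thesis unfolding wit_def using s0W n0 by auto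
  qed
  define dc where "dc = dec (\<sigma>0 0) wit \<sigma>0 n"
  define B' where "B' = range dc"
  have dcB: "dc c \<in> B" for c
  proof (cases c)
    case (Init i) then show ?thesis unfolding dc_def using s0W n0 by auto
  next
    case (Wit cs k x) then show ?thesis unfolding dc_def using witB by simp
  qed
  have B'B: "B' \<subseteq> B" unfolding B'_def using dcB by auto
  let ?W' = "{0..<n} \<rightarrow>\<^sub>E B'"
  have W'W: "?W' \<subseteq> ?W" using B'B by (auto simp: PiE_def Pi_def)
  have closure: "\<exists>\<tau>\<in>g x. (\<forall>j<n. j \<noteq> k \<longrightarrow> \<sigma> j = \<tau> j) \<and> \<tau> k \<in> B'"
    if s: "\<sigma> \<in> ?W'" and k: "k < n" and x: "x \<in> car" and m: "\<sigma> \<in> g (cy {k} x)" for \<sigma> k x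
  proof -
    have ex: "\<exists>\<tau>\<in>g x. \<forall>j<n. j \<noteq> k \<longrightarrow> \<sigma> j = \<tau> j" using m g_cy1[OF k x] by auto
    have "\<forall>i. \<exists>c. i < n \<longrightarrow> dc c = \<sigma> i" using s unfolding B'_def by (auto simp: PiE_def Pi_def) (metis rangeE)
    then obtain C where C: "\<And>i. i < n \<Longrightarrow> dc (C i) = \<sigma> i" by metis
    let ?cs = "map C [0..<n]"
    have eqs: "(\<lambda>i\<in>{0..<n}. if i < length ?cs then map dc ?cs ! i else \<sigma>0 0) = \<sigma>"
    proof (rule ext)
      fix i show "(\<lambda>i\<in>{0..<n}. if i < length ?cs then map dc ?cs ! i else \<sigma>0 0) i = \<sigma> i"
        using C s by (cases "i < n") (auto simp: PiE_def extensional_def)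
    qed
    have dw: "dc (Wit ?cs k x) = wit \<sigma> k x" unfolding dc_def dec.simps using eqs[unfolded dc_def] by simp
    obtain \<tau> where "\<tau> \<in> g x" "\<forall>j<n. j \<noteq> k \<longrightarrow> \<sigma> j = \<tau> j" "\<tau> k = wit \<sigma> k x" using wit_spec[OF k x ex] by blast
    moreover have "wit \<sigma> k x \<in> B'" unfolding B'_def using dw by (metis rangeI)
    ultimately show ?thesis by auto
  qed
  define e where "e b = enc (SOME c. dc c = b)" for b
  have einj: "inj_on e B'"
  proof (rule inj_onI)
    fix a b assume ab: "a \<in> B'" "b \<in> B'" "e a = e b"
    have "dc (SOME c. dc c = a) = a" using ab(1) unfolding B'_def by (metis (mono_tags, lifting) rangeE someI_ex)
    moreover have "dc (SOME c. dc c = b) = b" using ab(2) unfolding B'_def by (metis (mono_tags, lifting) rangeE someI_ex)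
    moreover have "(SOME c. dc c = a) = (SOME c. dc c = b)" using enc_inj ab(3) unfolding e_def by blast
    ultimately show "a = b" by metis
  qed
  define B'' where "B'' = e ` B'"
  let ?W'' = "{0..<n} \<rightarrow>\<^sub>E B''"
  define conv where "conv \<rho> = (\<lambda>i\<in>{0..<n}. inv_into B' e (\<rho> i))" for \<rho>
  define f where "f x = {\<rho> \<in> ?W''. conv \<rho> \<in> g x}" for x
  have convW: "conv \<rho> \<in> ?W'" if "\<rho> \<in> ?W''" for \<rho>
    using that unfolding conv_def B''_def by (auto simp: PiE_def Pi_def inv_into_into)
  have convW2: "conv \<rho> \<in> ?W" if "\<rho> \<in> ?W''" for \<rho> using convW[OF that] W'W by auto
  have ph: "prehom n D B'' f"
  proof (unfold_locales)
    show "\<And>x. x \<in> car \<Longrightarrow> f x \<subseteq> ?W''" unfolding f_def by auto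
    show "f (pzero D) = {}" unfolding f_def g_zero by auto
    show "f (pone D) = ?W''" unfolding f_def g_one using convW2 by auto
    show "\<And>x y. x \<in> car \<Longrightarrow> y \<in> car \<Longrightarrow> f (jn x y) = f x \<union> f y" unfolding f_def using g_jm by auto
    show "\<And>x y. x \<in> car \<Longrightarrow> y \<in> car \<Longrightarrow> f (mt x y) = f x \<inter> f y" unfolding f_def using g_jm by auto
    show "\<And>x. x \<in> car \<Longrightarrow> f (cm x) = ?W'' - f x" unfolding f_def using g_cm convW2 by auto
  next
    fix k x assume k: "k < n" and x: "x \<in> car"
    show "f (cy {k} x) = {s \<in> ?W''. \<exists>t\<in>f x. \<forall>j<n. j \<noteq> k \<longrightarrow> s j = t j}"
    proof (intro set_eqI iffI)
      fix \<rho> assume "\<rho> \<in> f (cy {k} x)"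
      then have r: "\<rho> \<in> ?W''" and m: "conv \<rho> \<in> g (cy {k} x)" unfolding f_def by auto
      obtain \<tau> where t: "\<tau> \<in> g x" "\<forall>j<n. j \<noteq> k \<longrightarrow> conv \<rho> j = \<tau> j" "\<tau> k \<in> B'"
        using closure[OF convW[OF r] k x m] by auto
      let ?r = "\<rho>(k := e (\<tau> k))"
      have rW: "?r \<in> ?W''" using r k t(3) unfolding B''_def by (auto simp: PiE_def Pi_def extensional_def)
      have tW: "\<tau> \<in> ?W" using t(1) g_sub[OF x] by auto
      have "conv ?r = \<tau>"
      proof (rule ext)
        fix i show "conv ?r i = \<tau> i"
        proof (cases "i < n")
          case True
          show ?thesis
          proof (cases "i = k")
            case True then show ?thesis unfolding conv_def using k inv_into_f_f[OF einj t(3)] by simp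
          next
            case False then show ?thesis using t(2) \<open>i < n\<close> unfolding conv_def by auto
          qed
        next
          case False then show ?thesis using tW unfolding conv_def by (auto simp: PiE_def extensional_def)
        qed
      qed
      then have "?r \<in> f x" unfolding f_def using rW t(1) by auto
      then show "\<rho> \<in> {s \<in> ?W''. \<exists>t\<in>f x. \<forall>j<n. j \<noteq> k \<longrightarrow> s j = t j}" using r by (intro CollectI conjI bexI[of _ ?r]) auto
    next
      fix \<rho> assume "\<rho> \<in> {s \<in> ?W''. \<exists>t\<in>f x. \<forall>j<n. j \<noteq> k \<longrightarrow> s j = t j}"
      then obtain \<tau> where r: "\<rho> \<in> ?W''" and t: "\<tau> \<in> f x" "\<forall>j<n. j \<noteq> k \<longrightarrow> \<rho> j = \<tau> j" by auto
      have "conv \<tau> \<in> g x" using t unfolding f_def by auto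
      moreover have "\<forall>j<n. j \<noteq> k \<longrightarrow> conv \<rho> j = conv \<tau> j" using t(2) unfolding conv_def by auto
      ultimately have "conv \<rho> \<in> g (cy {k} x)" using g_cy1[OF k x] convW2[OF r] by auto
      then show "\<rho> \<in> f (cy {k} x)" unfolding f_def using r by auto
    qed
  next
    fix i j assume ij: "i < n" "j < n"
    have injinv: "inj_on (inv_into B' e) B''" unfolding B''_def by (rule inj_on_inv_into) simp
    show "f (dg i j) = {s \<in> ?W''. s i = s j}"
    proof (intro set_eqI)
      fix \<rho>
      show "\<rho> \<in> f (dg i j) \<longleftrightarrow> \<rho> \<in> {s \<in> ?W''. s i = s j}"
      proof (cases "\<rho> \<in> ?W''")
        case True
        have ri: "\<rho> i \<in> B''" "\<rho> j \<in> B''" using True ij by auto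
        have "conv \<rho> i = conv \<rho> j \<longleftrightarrow> \<rho> i = \<rho> j"
          using inj_onD[OF injinv _ ri] ij unfolding conv_def by auto
        then show ?thesis unfolding f_def using g_dg[OF ij] convW2[OF True] True by auto
      next
        case False then show ?thesis unfolding f_def by auto
      qed
    qed
  qed
  have fhom: "pea_set_hom n D B'' f" using prehom.pea_hom[OF ph] .
  have fsup: "\<forall>X s. X \<subseteq> car \<longrightarrow> is_sup D X s \<longrightarrow> f s = (\<Union>x\<in>X. f x)"
    using sup unfolding f_def by auto
  have s0W': "\<sigma>0 \<in> ?W'"
  proof -
    have "\<sigma>0 i \<in> B'" if "i < n" for i
    proof -
      have "dc (Init i) = \<sigma>0 i" unfolding dc_def using that by simp
      then show ?thesis unfolding B'_def by (metis rangeI)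
    qed
    then show ?thesis using s0W by (auto simp: PiE_def Pi_def)
  qed
  let ?r0 = "\<lambda>i\<in>{0..<n}. e (\<sigma>0 i)"
  have r0W: "?r0 \<in> ?W''" using s0W' unfolding B''_def by (auto simp: PiE_def Pi_def)
  have "conv ?r0 = \<sigma>0"
  proof (rule ext)
    fix i show "conv ?r0 i = \<sigma>0 i"
    proof (cases "i < n")
      case True
      then have "\<sigma>0 i \<in> B'" using s0W' by auto
      then show ?thesis using True inv_into_f_f[OF einj] unfolding conv_def by simp
    next
      case False then show ?thesis using s0W unfolding conv_def by (auto simp: PiE_def extensional_def)
    qed
  qed
  then have "?r0 \<in> f z" unfolding f_def using r0W s0 by auto
  then show ?thesis using fhom fsup by blast
qed

end


lemma df_facts:
  assumes "df_set_hom n D U h"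
  shows "\<And>x. x \<in> pcar D \<Longrightarrow> h x \<subseteq> Pi\<^sub>E {0..<n} U"
    and "h (pzero D) = {}"
    and "\<And>x y. x \<in> pcar D \<Longrightarrow> y \<in> pcar D \<Longrightarrow> h (pmeet D x y) = h x \<inter> h y"
    and "\<And>x. x \<in> pcar D \<Longrightarrow> h (pcompl D x) = Pi\<^sub>E {0..<n} U - h x"
proof -
  note A = assms[unfolded df_set_hom_def Let_def]
  note A1 = A[THEN conjunct1]
  note A2 = A[THEN conjunct2, THEN conjunct1]
  note A4 = A[THEN conjunct2, THEN conjunct2, THEN conjunct2, THEN conjunct1]
  note A5 = A[THEN conjunct2, THEN conjunct2, THEN conjunct2, THEN conjunct2, THEN conjunct1]
  show "\<And>x. x \<in> pcar D \<Longrightarrow> h x \<subseteq> Pi\<^sub>E {0..<n} U" using A1 by blast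
  show "h (pzero D) = {}" using A2 .
  show "\<And>x y. x \<in> pcar D \<Longrightarrow> y \<in> pcar D \<Longrightarrow> h (pmeet D x y) = h x \<inter> h y" using A4 by blast
  show "\<And>x. x \<in> pcar D \<Longrightarrow> h (pcompl D x) = Pi\<^sub>E {0..<n} U - h x" using A5 by blast
qed

lemma pea_facts:
  assumes "pea_set_hom n D B f"
  shows "\<And>x y. x \<in> pcar D \<Longrightarrow> y \<in> pcar D \<Longrightarrow> f (pmeet D x y) = f x \<inter> f y"
    and "\<And>x. x \<in> pcar D \<Longrightarrow> f (pcompl D x) = ({0..<n} \<rightarrow>\<^sub>E B) - f x"
proof -
  note A = assms[unfolded pea_set_hom_def Let_def]
  note A4 = A[THEN conjunct2, THEN conjunct2, THEN conjunct2, THEN conjunct1]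
  note A5 = A[THEN conjunct2, THEN conjunct2, THEN conjunct2, THEN conjunct2, THEN conjunct1]
  show "\<And>x y. x \<in> pcar D \<Longrightarrow> y \<in> pcar D \<Longrightarrow> f (pmeet D x y) = f x \<inter> f y" using A4 by blast
  show "\<And>x. x \<in> pcar D \<Longrightarrow> f (pcompl D x) = ({0..<n} \<rightarrow>\<^sub>E B) - f x" using A5 by blast
qed

context peagen begin

lemma final:
  assumes dfc: "df_completely_representable n D TYPE('k) TYPE('b)"
  shows "pea_completely_representable n D TYPE('a) TYPE('a \<times> nat)"
proof -
  obtain K :: "'k set" and U :: "'k \<Rightarrow> nat \<Rightarrow> 'b set" and h where
    hk: "\<forall>k\<in>K. df_set_hom n D (U k) (h k)" and crf: "complete_rep_family D K h"
    using dfc unfolding df_completely_representable_def by blast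
  have injK: "\<And>x y. x \<in> car \<Longrightarrow> y \<in> car \<Longrightarrow> (\<forall>k\<in>K. h k x = h k y) \<Longrightarrow> x = y"
    using crf unfolding complete_rep_family_def by blast
  have supK: "\<And>X s k. X \<subseteq> car \<Longrightarrow> is_sup D X s \<Longrightarrow> k \<in> K \<Longrightarrow> h k s = (\<Union>x\<in>X. h k x)"
    using crf unfolding complete_rep_family_def by blast
  have zeroK: "\<And>k. k \<in> K \<Longrightarrow> h k (pzero D) = {}" using hk df_facts(2) by blast
  have rep: "\<exists>(B'' :: ('a \<times> nat) set) f. pea_set_hom n D B'' f \<and>
     (\<forall>X s. X \<subseteq> car \<longrightarrow> is_sup D X s \<longrightarrow> f s = (\<Union>x\<in>X. f x)) \<and> f z \<noteq> {}"
    if z: "z \<in> car" "z \<noteq> pzero D" for z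
  proof -
    have "\<exists>k\<in>K. h k z \<noteq> {}"
    proof (rule ccontr)
      assume "\<not> ?thesis"
      then have "\<forall>k\<in>K. h k z = h k (pzero D)" using zeroK by auto
      then have "z = pzero D" by (rule injK[OF z(1) zero_car])
      then show False using z(2) by simp
    qed
    then obtain k where k: "k \<in> K" and hz: "h k z \<noteq> {}" by blast
    then obtain t where t: "t \<in> h k z" by blast
    have dh: "df_set_hom n D (U k) (h k)" using hk k by blast
    have tV: "t \<in> Pi\<^sub>E {0..<n} (U k)" using subsetD[OF df_facts(1)[OF dh z(1)] t] .
    have Vne: "Pi\<^sub>E {0..<n} (U k) \<noteq> {}" using tV by blast
    interpret R: dfrep n D "U k" "h k"
      by (rule dfrep.intro[OF peagen_axioms]) (unfold_locales, rule dh, rule Vne)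
    obtain \<sigma>0 where s0: "\<sigma>0 \<in> R.g z" using R.g_point[OF z(1) t] by blast
    have sup: "\<forall>X s. X \<subseteq> car \<longrightarrow> is_sup D X s \<longrightarrow> R.g s = (\<Union>x\<in>X. R.g x)"
    proof (intro allI impI)
      fix X s assume "X \<subseteq> car" "is_sup D X s"
      then have "h k s = (\<Union>x\<in>X. h k x)" using supK k by blast
      then show "R.g s = (\<Union>x\<in>X. R.g x)" by (rule R.g_sup)
    qed
    show ?thesis using small_rep[OF R.g_hom z(1) s0 sup] .
  qed
  define PP where "PP z p \<longleftrightarrow> pea_set_hom n D (fst p) (snd p) \<and>
     (\<forall>X s. X \<subseteq> car \<longrightarrow> is_sup D X s \<longrightarrow> snd p s = (\<Union>x\<in>X. snd p x)) \<and> snd p z \<noteq> {}"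
    for z and p :: "('a \<times> nat) set \<times> ('a \<Rightarrow> (nat \<Rightarrow> 'a \<times> nat) set)"
  have ex: "\<forall>z. \<exists>p. z \<in> car \<and> z \<noteq> pzero D \<longrightarrow> PP z p"
  proof
    fix z
    show "\<exists>p. z \<in> car \<and> z \<noteq> pzero D \<longrightarrow> PP z p"
    proof (cases "z \<in> car \<and> z \<noteq> pzero D")
      case True
      have "\<exists>B f. PP z (B, f)" using rep[OF conjunct1[OF True] conjunct2[OF True]] unfolding PP_def by simp
      then have "\<exists>p. PP z p" by blast
      then show ?thesis by blast
    next
      case False then show ?thesis by (intro exI[of _ undefined] impI) (use False in blast)
    qed
  qed
  from choice[OF ex] obtain F where F0: "\<forall>z. z \<in> car \<and> z \<noteq> pzero D \<longrightarrow> PP z (F z)" by blast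
  have F: "pea_set_hom n D (fst (F z)) (snd (F z)) \<and>
     (\<forall>X s. X \<subseteq> car \<longrightarrow> is_sup D X s \<longrightarrow> snd (F z) s = (\<Union>x\<in>X. snd (F z) x)) \<and> snd (F z) z \<noteq> {}"
    if "z \<in> car" "z \<noteq> pzero D" for z
  proof -
    have "PP z (F z)" using F0 that by blast
    then show ?thesis unfolding PP_def .
  qed
  define K' where "K' = {z \<in> car. z \<noteq> pzero D}"
  define U' where "U' z = fst (F z)" for z
  define h' where "h' z = snd (F z)" for z
  have homs: "\<forall>z\<in>K'. pea_set_hom n D (U' z) (h' z)"
  proof
    fix z assume "z \<in> K'"
    then have "z \<in> car" "z \<noteq> pzero D" unfolding K'_def by auto
    then show "pea_set_hom n D (U' z) (h' z)" using F unfolding U'_def h'_def by blast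
  qed
  have sep: "\<exists>z\<in>K'. h' z x \<noteq> h' z y" if xy: "x \<in> car" "y \<in> car" "t \<in> h k x" "t \<notin> h k y" "k \<in> K" for x y t k
  proof -
    have dh: "df_set_hom n D (U k) (h k)" using hk xy(5) by auto
    let ?z = "mt x (cm y)"
    have zc: "?z \<in> car" using mt_car cm_car xy by auto
    have "t \<in> h k ?z" using df_facts(3)[OF dh xy(1) cm_car[OF xy(2)]] df_facts(4)[OF dh xy(2)]
        df_facts(1)[OF dh xy(1)] xy(3,4) by auto
    then have zn: "?z \<noteq> pzero D" using df_facts(2)[OF dh] by auto
    have zK: "?z \<in> K'" unfolding K'_def using zc zn by auto
    have Fz: "pea_set_hom n D (U' ?z) (h' ?z)" "h' ?z ?z \<noteq> {}" using F[OF zc zn] unfolding U'_def h'_def by auto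
    obtain r where r: "r \<in> h' ?z ?z" using Fz(2) by auto
    have "h' ?z ?z = h' ?z x \<inter> (({0..<n} \<rightarrow>\<^sub>E U' ?z) - h' ?z y)"
      using pea_facts(1)[OF Fz(1) xy(1) cm_car[OF xy(2)]] pea_facts(2)[OF Fz(1) xy(2)] by simp
    then have "r \<in> h' ?z x" "r \<notin> h' ?z y" using r by auto
    then show ?thesis using zK by blast
  qed
  have crf': "complete_rep_family D K' h'"
    unfolding complete_rep_family_def
  proof (intro conjI ballI allI impI)
    fix x y assume xy: "x \<in> car" "y \<in> car" and eq: "\<forall>k\<in>K'. h' k x = h' k y"
    show "x = y"
    proof (rule ccontr)
      assume "x \<noteq> y"
      then obtain k where k: "k \<in> K" "h k x \<noteq> h k y" using injK[OF xy] by blast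
      have "\<exists>t. (t \<in> h k x) \<noteq> (t \<in> h k y)" using k(2) by (meson set_eqI)
      then obtain t where "(t \<in> h k x) \<noteq> (t \<in> h k y)" by blast
      then have "(t \<in> h k x \<and> t \<notin> h k y) \<or> (t \<in> h k y \<and> t \<notin> h k x)" by blast
      then show False
      proof
        assume "t \<in> h k x \<and> t \<notin> h k y"
        then show False using sep[OF xy _ _ k(1)] eq by blast
      next
        assume "t \<in> h k y \<and> t \<notin> h k x"
        then show False using sep[OF xy(2,1) _ _ k(1)] eq by metis
      qed
    qed
  next
    fix X s k assume "X \<subseteq> car" "is_sup D X s" "k \<in> K'"
    then have "k \<in> car" "k \<noteq> pzero D" "X \<subseteq> car" "is_sup D X s" unfolding K'_def by auto
    then show "h' k s = (\<Union>x\<in>X. h' k x)" using F[of k] unfolding h'_def by blast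
  qed
  show ?thesis unfolding pea_completely_representable_def
    by (intro exI[of _ K'] exI[of _ U'] exI[of _ h'] conjI homs crf')
qed

end

theorem mainTheorem6:
  fixes n :: nat and D :: "'a pea"
  assumes "n \<ge> 3"
    and "PEA n D"
    and "pea_generated_by n D {x \<in> pcar D. dimset n D x \<noteq> {0..<n}}"
    and "df_completely_representable n D TYPE('k) TYPE('b)"
  shows "pea_completely_representable n D TYPE('a) TYPE('a \<times> nat)"
proof -
  have P: "peagen n D" using assms(1-3) unfolding peagen_def peactx_def peagen_axioms_def by blast
  show ?thesis using peagen.final[OF P assms(4)] .
qed


end
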